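(* Let $T$ be a complete first-order theory and $\pi(\bar x)$ a partial type over $\emptyset$ (with $\bar x$ a possibly infinite tuple of variables). Let $M$ and $M'$ be two $\aleph_0$-saturated and strongly $\aleph_0$-homogeneous models of $T$. If there is an $\mathrm{Aut}(M)$-invariant regular Borel probability measure on $S_\pi(M)=\{q\in S_{\bar x}(M):\pi\subseteq q\}$, then there is an $\mathrm{Aut}(M')$-invariant regular Borel probability measure on $S_\pi(M')$. In particular, amenability of $\pi$ does not depend on the choice of the monster model, and $\pi$ is amenable if and only if there is an $\mathrm{Aut}(M)$-invariant regular Borel probability measure on $S_\pi(M)$ for some (equivalently, any) $\aleph_0$-saturated and strongly $\aleph_0$-homogeneous model $M$.
   Context: A model $N$ is strongly $\aleph_0$-homogeneous if every partial elementary map between finite subsets of $N$ extends to an automorphism of $N$. $\mathrm{Aut}(N)$ acts on $S_\pi(N)$ by $\varphi(\bar x,\sigma(\bar b))\in\sigma q$ iff $\varphi(\bar x,\bar b)\in q$. A partial type $\pi(\bar x)$ over $\emptyset$ is amenable if there is an $\mathrm{Aut}(\mathfrak C)$-invariant regular Borel probability measure on $S_\pi(\mathfrak C)$, where $\mathfrak C$ is a monster model of $T$ ($\kappa$-saturated and strongly $\kappa$-homogeneous for a large $\kappa$). *)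

theory Defs
  imports "HOL-Analysis.Analysis" "HOL-Probability.Probability"
begin

text \<open>Terms over function symbols 'f, variables 'v and parameters (names for
elements of a structure) 'p.\<close>
datatype ('f, 'v, 'p) trm = Var 'v | Par 'p | Fn 'f "('f, 'v, 'p) trm list"

datatype ('f, 'r, 'v, 'p) fm =
    Eq "('f, 'v, 'p) trm" "('f, 'v, 'p) trm"
  | Rel 'r "('f, 'v, 'p) trm list"
  | Neg "('f, 'r, 'v, 'p) fm"
  | Conj "('f, 'r, 'v, 'p) fm" "('f, 'r, 'v, 'p) fm"
  | Ex 'v "('f, 'r, 'v, 'p) fm"

type_synonym ('f, 'r) lang = "('f \<Rightarrow> nat) \<times> ('r \<Rightarrow> nat)"

fun wf_trm :: "('f, 'r) lang \<Rightarrow> ('f, 'v, 'p) trm \<Rightarrow> bool" where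
  "wf_trm L (Var x) = True"
| "wf_trm L (Par a) = True"
| "wf_trm L (Fn f ts) = (length ts = fst L f \<and> (\<forall>t\<in>set ts. wf_trm L t))"

fun wf_fm :: "('f, 'r) lang \<Rightarrow> ('f, 'r, 'v, 'p) fm \<Rightarrow> bool" where
  "wf_fm L (Eq s t) = (wf_trm L s \<and> wf_trm L t)"
| "wf_fm L (Rel r ts) = (length ts = snd L r \<and> (\<forall>t\<in>set ts. wf_trm L t))"
| "wf_fm L (Neg \<phi>) = wf_fm L \<phi>"
| "wf_fm L (Conj \<phi> \<psi>) = (wf_fm L \<phi> \<and> wf_fm L \<psi>)"
| "wf_fm L (Ex x \<phi>) = wf_fm L \<phi>"

fun fv_trm :: "('f, 'v, 'p) trm \<Rightarrow> 'v set" where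
  "fv_trm (Var x) = {x}"
| "fv_trm (Par a) = {}"
| "fv_trm (Fn f ts) = (\<Union>t\<in>set ts. fv_trm t)"

fun fv :: "('f, 'r, 'v, 'p) fm \<Rightarrow> 'v set" where
  "fv (Eq s t) = fv_trm s \<union> fv_trm t"
| "fv (Rel r ts) = (\<Union>t\<in>set ts. fv_trm t)"
| "fv (Neg \<phi>) = fv \<phi>"
| "fv (Conj \<phi> \<psi>) = fv \<phi> \<union> fv \<psi>"
| "fv (Ex x \<phi>) = fv \<phi> - {x}"

fun params_trm :: "('f, 'v, 'p) trm \<Rightarrow> 'p set" where
  "params_trm (Var x) = {}"
| "params_trm (Par a) = {a}"
| "params_trm (Fn f ts) = (\<Union>t\<in>set ts. params_trm t)"

fun params :: "('f, 'r, 'v, 'p) fm \<Rightarrow> 'p set" where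
  "params (Eq s t) = params_trm s \<union> params_trm t"
| "params (Rel r ts) = (\<Union>t\<in>set ts. params_trm t)"
| "params (Neg \<phi>) = params \<phi>"
| "params (Conj \<phi> \<psi>) = params \<phi> \<union> params \<psi>"
| "params (Ex x \<phi>) = params \<phi>"

fun map_par_trm :: "('p \<Rightarrow> 'q) \<Rightarrow> ('f, 'v, 'p) trm \<Rightarrow> ('f, 'v, 'q) trm" where
  "map_par_trm g (Var x) = Var x"
| "map_par_trm g (Par a) = Par (g a)"
| "map_par_trm g (Fn f ts) = Fn f (map (map_par_trm g) ts)"

fun map_par :: "('p \<Rightarrow> 'q) \<Rightarrow> ('f, 'r, 'v, 'p) fm \<Rightarrow> ('f, 'r, 'v, 'q) fm" where
  "map_par g (Eq s t) = Eq (map_par_trm g s) (map_par_trm g t)"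
| "map_par g (Rel r ts) = Rel r (map (map_par_trm g) ts)"
| "map_par g (Neg \<phi>) = Neg (map_par g \<phi>)"
| "map_par g (Conj \<phi> \<psi>) = Conj (map_par g \<phi>) (map_par g \<psi>)"
| "map_par g (Ex x \<phi>) = Ex x (map_par g \<phi>)"

text \<open>Pure L-formulas (without parameters) are represented with the dummy
parameter type unit and no parameter occurrences; \<open>lift\<close> views them as
formulas with parameters of any type.\<close>
definition lift :: "('f, 'r, 'v, unit) fm \<Rightarrow> ('f, 'r, 'v, 'p) fm" where
  "lift \<phi> = map_par (\<lambda>_. undefined) \<phi>"

definition L_formula :: "('f, 'r) lang \<Rightarrow> ('f, 'r, 'v, unit) fm \<Rightarrow> bool" where
  "L_formula L \<phi> \<longleftrightarrow> wf_fm L \<phi> \<and> params \<phi> = {}"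

definition L_sentence :: "('f, 'r) lang \<Rightarrow> ('f, 'r, 'v, unit) fm \<Rightarrow> bool" where
  "L_sentence L \<phi> \<longleftrightarrow> L_formula L \<phi> \<and> fv \<phi> = {}"

record ('f, 'r, 'm) struct =
  univ :: "'m set"
  fint :: "'f \<Rightarrow> 'm list \<Rightarrow> 'm"
  rint :: "'r \<Rightarrow> 'm list \<Rightarrow> bool"

definition is_struct :: "('f, 'r) lang \<Rightarrow> ('f, 'r, 'm) struct \<Rightarrow> bool" where
  "is_struct L M \<longleftrightarrow> univ M \<noteq> {} \<and>
     (\<forall>f xs. set xs \<subseteq> univ M \<and> length xs = fst L f \<longrightarrow> fint M f xs \<in> univ M)"

fun eval_trm :: "('f, 'r, 'm) struct \<Rightarrow> ('v \<Rightarrow> 'm) \<Rightarrow> ('f, 'v, 'm) trm \<Rightarrow> 'm" where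
  "eval_trm M e (Var x) = e x"
| "eval_trm M e (Par a) = a"
| "eval_trm M e (Fn f ts) = fint M f (map (eval_trm M e) ts)"

fun sat :: "('f, 'r, 'm) struct \<Rightarrow> ('v \<Rightarrow> 'm) \<Rightarrow> ('f, 'r, 'v, 'm) fm \<Rightarrow> bool" where
  "sat M e (Eq s t) = (eval_trm M e s = eval_trm M e t)"
| "sat M e (Rel r ts) = rint M r (map (eval_trm M e) ts)"
| "sat M e (Neg \<phi>) = (\<not> sat M e \<phi>)"
| "sat M e (Conj \<phi> \<psi>) = (sat M e \<phi> \<and> sat M e \<psi>)"
| "sat M e (Ex x \<phi>) = (\<exists>a\<in>univ M. sat M (e(x := a)) \<phi>)"

definition assignment :: "('f, 'r, 'm) struct \<Rightarrow> ('v \<Rightarrow> 'm) \<Rightarrow> bool" where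
  "assignment M e \<longleftrightarrow> (\<forall>v. e v \<in> univ M)"

definition is_model :: "('f, 'r) lang \<Rightarrow> ('f, 'r, 'v, unit) fm set \<Rightarrow> ('f, 'r, 'm) struct \<Rightarrow> bool" where
  "is_model L T M \<longleftrightarrow> is_struct L M \<and> (\<forall>\<phi>\<in>T. \<forall>e. assignment M e \<longrightarrow> sat M e (lift \<phi>))"

definition complete_theory :: "('f, 'r) lang \<Rightarrow> ('f, 'r, 'v, unit) fm set \<Rightarrow> bool" where
  "complete_theory L T \<longleftrightarrow> (\<forall>\<phi>\<in>T. L_sentence L \<phi>) \<and>
     (\<forall>\<phi>. L_sentence L \<phi> \<longrightarrow> \<phi> \<in> T \<or> Neg \<phi> \<in> T)"

text \<open>A partial type over the empty set in the variables \<open>x\<close> (indexed by 'x):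
a set of L-formulas whose free variables are among \<open>x = (Inl i)_i\<close>
(the variables \<open>Inr n\<close> are auxiliary, e.g. for quantification).\<close>
definition partial_type :: "('f, 'r) lang \<Rightarrow> ('f, 'r, 'x + nat, unit) fm set \<Rightarrow> bool" where
  "partial_type L \<pi> \<longleftrightarrow> (\<forall>\<phi>\<in>\<pi>. L_formula L \<phi> \<and> fv \<phi> \<subseteq> range Inl)"

definition Aut :: "('f, 'r) lang \<Rightarrow> ('f, 'r, 'm) struct \<Rightarrow> ('m \<Rightarrow> 'm) set" where
  "Aut L M = {\<sigma>. bij_betw \<sigma> (univ M) (univ M) \<and>
     (\<forall>f xs. set xs \<subseteq> univ M \<and> length xs = fst L f \<longrightarrow> \<sigma> (fint M f xs) = fint M f (map \<sigma> xs)) \<and>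
     (\<forall>r xs. set xs \<subseteq> univ M \<and> length xs = snd L r \<longrightarrow> rint M r (map \<sigma> xs) = rint M r xs)}"

definition partial_elementary ::
  "('f, 'r) lang \<Rightarrow> ('f, 'r, 'm) struct \<Rightarrow> 'm set \<Rightarrow> ('m \<Rightarrow> 'm) \<Rightarrow> bool" where
  "partial_elementary L M A h \<longleftrightarrow> A \<subseteq> univ M \<and> h ` A \<subseteq> univ M \<and>
     (\<forall>(\<phi> :: ('f, 'r, nat, unit) fm) e. L_formula L \<phi> \<and> (\<forall>v. e v \<in> A) \<longrightarrow>
        (sat M e (lift \<phi>) \<longleftrightarrow> sat M (h \<circ> e) (lift \<phi>)))"

definition strongly_aleph0_homogeneous :: "('f, 'r) lang \<Rightarrow> ('f, 'r, 'm) struct \<Rightarrow> bool" where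
  "strongly_aleph0_homogeneous L M \<longleftrightarrow>
     (\<forall>A h. finite A \<and> partial_elementary L M A h \<longrightarrow> (\<exists>\<sigma>\<in>Aut L M. \<forall>a\<in>A. \<sigma> a = h a))"

definition aleph0_saturated :: "('f, 'r) lang \<Rightarrow> ('f, 'r, 'm) struct \<Rightarrow> bool" where
  "aleph0_saturated L M \<longleftrightarrow>
     (\<forall>A (p :: ('f, 'r, nat, 'm) fm set). finite A \<and> A \<subseteq> univ M \<and>
        (\<forall>\<phi>\<in>p. wf_fm L \<phi> \<and> params \<phi> \<subseteq> A \<and> fv \<phi> \<subseteq> {0}) \<and>
        (\<forall>F\<subseteq>p. finite F \<longrightarrow> (\<exists>e. assignment M e \<and> (\<forall>\<phi>\<in>F. sat M e \<phi>)))
      \<longrightarrow> (\<exists>e. assignment M e \<and> (\<forall>\<phi>\<in>p. sat M e \<phi>)))"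

definition LM_formulas :: "('f, 'r) lang \<Rightarrow> ('f, 'r, 'm) struct \<Rightarrow> ('f, 'r, 'x + nat, 'm) fm set" where
  "LM_formulas L M = {\<phi>. wf_fm L \<phi> \<and> params \<phi> \<subseteq> univ M \<and> fv \<phi> \<subseteq> range Inl}"

text \<open>\<open>S_x(M)\<close>: complete types over M, i.e. maximal sets of L(M)-formulas in
\<open>x\<close> which are finitely satisfiable in M (= consistent with Th(M_M)).\<close>
definition types :: "('f, 'r) lang \<Rightarrow> ('f, 'r, 'm) struct \<Rightarrow> ('f, 'r, 'x + nat, 'm) fm set set" where
  "types L M = {q. q \<subseteq> LM_formulas L M \<and>
      (\<forall>\<phi>\<in>LM_formulas L M. \<phi> \<in> q \<or> Neg \<phi> \<in> q) \<and>
      (\<forall>F\<subseteq>q. finite F \<longrightarrow> (\<exists>e. assignment M e \<and> (\<forall>\<phi>\<in>F. sat M e \<phi>)))}"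

definition types_pi ::
  "('f, 'r) lang \<Rightarrow> ('f, 'r, 'x + nat, unit) fm set \<Rightarrow> ('f, 'r, 'm) struct \<Rightarrow> ('f, 'r, 'x + nat, 'm) fm set set" where
  "types_pi L \<pi> M = {q \<in> types L M. lift ` \<pi> \<subseteq> q}"

definition stone_top ::
  "('f, 'r) lang \<Rightarrow> ('f, 'r, 'x + nat, unit) fm set \<Rightarrow> ('f, 'r, 'm) struct \<Rightarrow> ('f, 'r, 'x + nat, 'm) fm set topology" where
  "stone_top L \<pi> M = subtopology
     (topology_generated_by {{q \<in> types_pi L \<pi> M. \<phi> \<in> q} | \<phi>. \<phi> \<in> LM_formulas L M})
     (types_pi L \<pi> M)"

definition act_type :: "('m \<Rightarrow> 'm) \<Rightarrow> ('f, 'r, 'v, 'm) fm set \<Rightarrow> ('f, 'r, 'v, 'm) fm set" where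
  "act_type \<sigma> q = map_par \<sigma> ` q"

definition borel_of :: "'a topology \<Rightarrow> 'a measure" where
  "borel_of X = sigma (topspace X) {U. openin X U}"

definition regular_borel_prob :: "'a topology \<Rightarrow> 'a measure \<Rightarrow> bool" where
  "regular_borel_prob X \<mu> \<longleftrightarrow> prob_space \<mu> \<and> space \<mu> = topspace X \<and>
     sets \<mu> = sets (borel_of X) \<and>
     (\<forall>B\<in>sets \<mu>.
        measure \<mu> B = (INF U\<in>{U. openin X U \<and> B \<subseteq> U}. measure \<mu> U) \<and>
        measure \<mu> B = (SUP C\<in>{C. closedin X C \<and> C \<subseteq> B}. measure \<mu> C))"

definition aut_invariant_measure ::
  "('f, 'r) lang \<Rightarrow> ('f, 'r, 'x + nat, unit) fm set \<Rightarrow> ('f, 'r, 'm) struct \<Rightarrow> ('f, 'r, 'x + nat, 'm) fm set measure \<Rightarrow> bool" where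
  "aut_invariant_measure L \<pi> M \<mu> \<longleftrightarrow>
     regular_borel_prob (stone_top L \<pi> M) \<mu> \<and>
     (\<forall>\<sigma>\<in>Aut L M. \<forall>B\<in>sets \<mu>. emeasure \<mu> (act_type \<sigma> ` B) = emeasure \<mu> B)"

end

theory Submission
  imports Defs
begin

fun trt :: "('v \<Rightarrow> 'w) \<Rightarrow> ('p \<Rightarrow> 'w + 'q) \<Rightarrow> ('f, 'v, 'p) trm \<Rightarrow> ('f, 'w, 'q) trm" where
  "trt \<rho> \<kappa> (Var v) = Var (\<rho> v)"
| "trt \<rho> \<kappa> (Par a) = (case \<kappa> a of Inl w \<Rightarrow> Var w | Inr q \<Rightarrow> Par q)"
| "trt \<rho> \<kappa> (Fn f ts) = Fn f (map (trt \<rho> \<kappa>) ts)"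

fun trf :: "('v \<Rightarrow> 'w) \<Rightarrow> ('p \<Rightarrow> 'w + 'q) \<Rightarrow> ('f, 'r, 'v, 'p) fm \<Rightarrow> ('f, 'r, 'w, 'q) fm" where
  "trf \<rho> \<kappa> (Eq s t) = Eq (trt \<rho> \<kappa> s) (trt \<rho> \<kappa> t)"
| "trf \<rho> \<kappa> (Rel r ts) = Rel r (map (trt \<rho> \<kappa>) ts)"
| "trf \<rho> \<kappa> (Neg \<phi>) = Neg (trf \<rho> \<kappa> \<phi>)"
| "trf \<rho> \<kappa> (Conj \<phi> \<psi>) = Conj (trf \<rho> \<kappa> \<phi>) (trf \<rho> \<kappa> \<psi>)"
| "trf \<rho> \<kappa> (Ex x \<phi>) = Ex (\<rho> x) (trf \<rho> \<kappa> \<phi>)"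

fun vars :: "('f, 'r, 'v, 'p) fm \<Rightarrow> 'v set" where
  "vars (Eq s t) = fv_trm s \<union> fv_trm t"
| "vars (Rel r ts) = (\<Union>t\<in>set ts. fv_trm t)"
| "vars (Neg \<phi>) = vars \<phi>"
| "vars (Conj \<phi> \<psi>) = vars \<phi> \<union> vars \<psi>"
| "vars (Ex x \<phi>) = insert x (vars \<phi>)"

definition kval :: "('p \<Rightarrow> 'w + 'q) \<Rightarrow> ('w \<Rightarrow> 'q) \<Rightarrow> 'p \<Rightarrow> 'q" where
  "kval \<kappa> e a = (case \<kappa> a of Inl w \<Rightarrow> e w | Inr q \<Rightarrow> q)"

definition Kw :: "('p \<Rightarrow> 'w + 'q) \<Rightarrow> 'p set \<Rightarrow> 'w set" where
  "Kw \<kappa> P = {w. \<exists>a\<in>P. \<kappa> a = Inl w}"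

lemma finite_fv_trm: "finite (fv_trm t)"
  by (induction t) auto
lemma finite_params_trm: "finite (params_trm t)"
  by (induction t) auto
lemma finite_vars: "finite (vars \<phi>)"
  by (induction \<phi>) (auto simp: finite_fv_trm)
lemma finite_params: "finite (params \<phi>)"
  by (induction \<phi>) (auto simp: finite_params_trm)
lemma finite_fv: "finite (fv \<phi>)"
  by (induction \<phi>) (auto simp: finite_fv_trm)
lemma fv_vars: "fv \<phi> \<subseteq> vars \<phi>"
  by (induction \<phi>) auto

lemma eval_trt: "eval_trm M e (trt \<rho> \<kappa> t) = eval_trm M (\<lambda>v. e (\<rho> v)) (map_par_trm (kval \<kappa> e) t)"
proof (induction t)
  case (Fn f ts)
  have "map (eval_trm M e) (map (trt \<rho> \<kappa>) ts) = map (eval_trm M (\<lambda>v. e (\<rho> v))) (map (map_par_trm (kval \<kappa> e)) ts)"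
    unfolding map_map by (rule map_cong) (use Fn in auto)
  thus ?case by (simp only: trt.simps map_par_trm.simps eval_trm.simps)
qed (auto simp: kval_def split: sum.splits)

lemma eval_cong: "(\<forall>v\<in>fv_trm t. e v = e' v) \<Longrightarrow> eval_trm M e t = eval_trm M e' t"
proof (induction t)
  case (Fn f ts)
  have "map (eval_trm M e) ts = map (eval_trm M e') ts"
    by (rule map_cong) (use Fn in auto)
  thus ?case by (simp only: eval_trm.simps)
qed auto

lemma sat_cong: "(\<forall>v\<in>fv \<phi>. e v = e' v) \<Longrightarrow> sat M e \<phi> = sat M e' \<phi>"
proof (induction \<phi> arbitrary: e e')
  case (Eq s t) thus ?case using eval_cong[of s e e' M] eval_cong[of t e e' M] by auto
next
  case (Rel r ts)
  have "map (eval_trm M e) ts = map (eval_trm M e') ts"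
    by (rule map_cong) (use Rel eval_cong[of _ e e' M] in auto)
  thus ?case by (simp only: sat.simps)
next
  case (Conj \<phi> \<psi>)
  have "sat M e \<phi> = sat M e' \<phi>" "sat M e \<psi> = sat M e' \<psi>"
    using Conj.IH Conj.prems by auto
  thus ?case by simp
next
  case (Ex x \<phi>)
  have "\<And>a. sat M (e(x := a)) \<phi> = sat M (e'(x := a)) \<phi>" using Ex.IH Ex.prems by auto
  thus ?case by simp
qed auto

lemma map_par_trm_cong: "(\<forall>a\<in>params_trm t. g a = h a) \<Longrightarrow> map_par_trm g t = map_par_trm h t"
  by (induction t) auto

lemma map_par_cong: "(\<forall>a\<in>params \<phi>. g a = h a) \<Longrightarrow> map_par g \<phi> = map_par h \<phi>"
  by (induction \<phi>) (auto intro: map_par_trm_cong)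

lemma fv_map_par_trm[simp]: "fv_trm (map_par_trm g t) = fv_trm t"
  by (induction t) auto
lemma fv_map_par[simp]: "fv (map_par g \<phi>) = fv \<phi>"
  by (induction \<phi>) auto
lemma params_map_par_trm[simp]: "params_trm (map_par_trm g t) = g ` params_trm t"
  by (induction t) auto
lemma params_map_par[simp]: "params (map_par g \<phi>) = g ` params \<phi>"
  by (induction \<phi>) (auto simp: image_Un image_UN)
lemma wf_map_par_trm[simp]: "wf_trm L (map_par_trm g t) = wf_trm L t"
  by (induction t) auto
lemma wf_map_par[simp]: "wf_fm L (map_par g \<phi>) = wf_fm L \<phi>"
  by (induction \<phi>) auto
lemma map_par_trm_comp: "map_par_trm g (map_par_trm h t) = map_par_trm (\<lambda>a. g (h a)) t"
  by (induction t) auto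
lemma map_par_comp: "map_par g (map_par h \<phi>) = map_par (\<lambda>a. g (h a)) \<phi>"
  by (induction \<phi>) (auto simp: map_par_trm_comp)
lemma map_par_trm_id: "map_par_trm (\<lambda>x. x) t = t"
  by (induction t) (auto simp: map_idI)
lemma map_par_id: "map_par (\<lambda>x. x) \<phi> = \<phi>"
  by (induction \<phi>) (auto simp: map_par_trm_id map_idI)

lemma sat_trf:
  assumes "inj_on \<rho> (vars \<phi>)" "\<rho> ` vars \<phi> \<inter> Kw \<kappa> (params \<phi>) = {}"
  shows "sat M e (trf \<rho> \<kappa> \<phi>) = sat M (\<lambda>v. e (\<rho> v)) (map_par (kval \<kappa> e) \<phi>)"
  using assms
proof (induction \<phi> arbitrary: e)
  case (Eq s t) thus ?case by (simp add: eval_trt)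
next
  case (Rel r ts)
  have "map (eval_trm M e) (map (trt \<rho> \<kappa>) ts) = map (eval_trm M (\<lambda>v. e (\<rho> v))) (map (map_par_trm (kval \<kappa> e)) ts)"
    unfolding map_map by (rule map_cong) (simp_all add: eval_trt)
  thus ?case by (simp only: trf.simps map_par.simps sat.simps)
next
  case (Neg \<phi>) thus ?case by simp
next
  case (Conj \<phi> \<psi>)
  have a: "inj_on \<rho> (vars \<phi>)" "inj_on \<rho> (vars \<psi>)" using Conj.prems(1) by (auto intro: inj_on_subset)
  have b: "\<rho> ` vars \<phi> \<inter> Kw \<kappa> (params \<phi>) = {}" "\<rho> ` vars \<psi> \<inter> Kw \<kappa> (params \<psi>) = {}"
    using Conj.prems(2) by (auto simp: Kw_def)
  show ?case using Conj.IH(1)[OF a(1) b(1)] Conj.IH(2)[OF a(2) b(2)] by simp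
next
  case (Ex x \<phi>)
  have i: "inj_on \<rho> (vars \<phi>)" using Ex.prems(1) by (auto intro: inj_on_subset)
  have k: "\<rho> ` vars \<phi> \<inter> Kw \<kappa> (params \<phi>) = {}" using Ex.prems(2) by auto
  have "sat M (e(\<rho> x := a)) (trf \<rho> \<kappa> \<phi>) = sat M ((\<lambda>v. e (\<rho> v))(x := a)) (map_par (kval \<kappa> e) \<phi>)" for a
  proof -
    have "sat M (e(\<rho> x := a)) (trf \<rho> \<kappa> \<phi>) = sat M (\<lambda>v. (e(\<rho> x := a)) (\<rho> v)) (map_par (kval \<kappa> (e(\<rho> x := a))) \<phi>)"
      by (rule Ex.IH[OF i k])
    also have "map_par (kval \<kappa> (e(\<rho> x := a))) \<phi> = map_par (kval \<kappa> e) \<phi>"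
    proof (rule map_par_cong, rule ballI)
      fix b assume b: "b \<in> params \<phi>"
      show "kval \<kappa> (e(\<rho> x := a)) b = kval \<kappa> e b"
      proof (cases "\<kappa> b")
        case (Inl w)
        hence "w \<in> Kw \<kappa> (params (Ex x \<phi>))" using b by (auto simp: Kw_def)
        hence "w \<noteq> \<rho> x" using Ex.prems(2) by auto
        thus ?thesis using Inl by (simp add: kval_def)
      qed (simp add: kval_def)
    qed
    also have "sat M (\<lambda>v. (e(\<rho> x := a)) (\<rho> v)) (map_par (kval \<kappa> e) \<phi>) = sat M ((\<lambda>v. e (\<rho> v))(x := a)) (map_par (kval \<kappa> e) \<phi>)"
    proof (rule sat_cong, rule ballI)
      fix v assume "v \<in> fv (map_par (kval \<kappa> e) \<phi>)"
      hence v: "v \<in> vars \<phi>" using fv_vars[of \<phi>] by auto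
      show "(e(\<rho> x := a)) (\<rho> v) = ((\<lambda>v. e (\<rho> v))(x := a)) v"
      proof (cases "v = x")
        case False
        hence "\<rho> v \<noteq> \<rho> x" using inj_onD[OF Ex.prems(1), of v x] v by auto
        thus ?thesis using False by simp
      qed simp
    qed
    finally show ?thesis .
  qed
  thus ?case by simp
qed

lemma trt_map_par: "map_par_trm g (trt \<rho> \<kappa> t) = trt \<rho> (\<lambda>a. map_sum (\<lambda>a. a) g (\<kappa> a)) t"
  by (induction t) (auto split: sum.splits)
lemma trf_map_par: "map_par g (trf \<rho> \<kappa> \<phi>) = trf \<rho> (\<lambda>a. map_sum (\<lambda>a. a) g (\<kappa> a)) \<phi>"
  by (induction \<phi>) (auto simp: trt_map_par)
lemma trt_of_map_par: "trt \<rho> \<kappa> (map_par_trm h t) = trt \<rho> (\<lambda>a. \<kappa> (h a)) t"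
  by (induction t) auto
lemma trf_of_map_par: "trf \<rho> \<kappa> (map_par h \<phi>) = trf \<rho> (\<lambda>a. \<kappa> (h a)) \<phi>"
  by (induction \<phi>) (auto simp: trt_of_map_par)
lemma wf_trt[simp]: "wf_trm L (trt \<rho> \<kappa> t) = wf_trm L t"
  by (induction t) (auto split: sum.splits)
lemma wf_trf[simp]: "wf_fm L (trf \<rho> \<kappa> \<phi>) = wf_fm L \<phi>"
  by (induction \<phi>) auto
lemma fv_trt: "fv_trm (trt \<rho> \<kappa> t) \<subseteq> \<rho> ` fv_trm t \<union> Kw \<kappa> (params_trm t)"
proof (induction t)
  case (Fn f ts)
  have m: "\<rho> ` fv_trm t \<union> Kw \<kappa> (params_trm t) \<subseteq> \<rho> ` fv_trm (Fn f ts) \<union> Kw \<kappa> (params_trm (Fn f ts))"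
    if "t \<in> set ts" for t using that by (auto simp: Kw_def)
  show ?case
  proof (rule subsetI)
    fix x assume "x \<in> fv_trm (trt \<rho> \<kappa> (Fn f ts))"
    then obtain t where "t \<in> set ts" "x \<in> fv_trm (trt \<rho> \<kappa> t)" by auto
    thus "x \<in> \<rho> ` fv_trm (Fn f ts) \<union> Kw \<kappa> (params_trm (Fn f ts))" using Fn.IH m by blast
  qed
qed (auto simp: Kw_def split: sum.splits)
lemma fv_trf: "fv (trf \<rho> \<kappa> \<phi>) \<subseteq> \<rho> ` fv \<phi> \<union> Kw \<kappa> (params \<phi>)"
proof (induction \<phi>)
  case (Eq s t) thus ?case using fv_trt[of \<rho> \<kappa> s] fv_trt[of \<rho> \<kappa> t] by (auto simp: Kw_def)
next
  case (Rel r ts) thus ?case using fv_trt[of \<rho> \<kappa>] by (fastforce simp: Kw_def)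
next
  case (Conj \<phi> \<psi>) thus ?case by (auto simp: Kw_def)
next
  case (Ex x \<phi>) thus ?case by (auto simp: Kw_def)
qed auto
lemma params_trt: "params_trm (trt \<rho> \<kappa> t) = {q. \<exists>a\<in>params_trm t. \<kappa> a = Inr q}"
  by (induction t) (auto split: sum.splits)
lemma params_trf: "params (trf \<rho> \<kappa> \<phi>) = {q. \<exists>a\<in>params \<phi>. \<kappa> a = Inr q}"
  by (induction \<phi>) (auto simp: params_trt)

fun pst :: "('v \<Rightarrow> 'p option) \<Rightarrow> ('f, 'v, 'p) trm \<Rightarrow> ('f, 'v, 'p) trm" where
  "pst c (Var v) = (case c v of Some a \<Rightarrow> Par a | None \<Rightarrow> Var v)"
| "pst c (Par a) = Par a"
| "pst c (Fn f ts) = Fn f (map (pst c) ts)"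

fun psf :: "('v \<Rightarrow> 'p option) \<Rightarrow> ('f, 'r, 'v, 'p) fm \<Rightarrow> ('f, 'r, 'v, 'p) fm" where
  "psf c (Eq s t) = Eq (pst c s) (pst c t)"
| "psf c (Rel r ts) = Rel r (map (pst c) ts)"
| "psf c (Neg \<phi>) = Neg (psf c \<phi>)"
| "psf c (Conj \<phi> \<psi>) = Conj (psf c \<phi>) (psf c \<psi>)"
| "psf c (Ex x \<phi>) = Ex x (psf (c(x := None)) \<phi>)"

lemma eval_pst: "eval_trm M e (pst c t) = eval_trm M (\<lambda>v. case c v of Some a \<Rightarrow> a | None \<Rightarrow> e v) t"
proof (induction t)
  case (Fn f ts)
  have "map (eval_trm M e) (map (pst c) ts) = map (eval_trm M (\<lambda>v. case c v of Some a \<Rightarrow> a | None \<Rightarrow> e v)) ts"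
    unfolding map_map by (rule map_cong) (use Fn in auto)
  thus ?case by (simp only: pst.simps eval_trm.simps)
qed (auto split: option.splits)

lemma sat_psf: "sat M e (psf c \<phi>) = sat M (\<lambda>v. case c v of Some a \<Rightarrow> a | None \<Rightarrow> e v) \<phi>"
proof (induction \<phi> arbitrary: c e)
  case (Eq s t) thus ?case by (simp add: eval_pst)
next
  case (Rel r ts) thus ?case by (simp add: eval_pst comp_def)
next
  case (Ex x \<phi>)
  have "(\<lambda>v. case (c(x := None)) v of Some a \<Rightarrow> a | None \<Rightarrow> (e(x := b)) v)
      = (\<lambda>v. case c v of Some a \<Rightarrow> a | None \<Rightarrow> e v)(x := b)" for b
    by (rule ext) (auto split: option.splits)
  thus ?case using Ex.IH by simp
qed auto

lemma pst_map_par: "map_par_trm g (pst c t) = pst (\<lambda>a. map_option g (c a)) (map_par_trm g t)"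
  by (induction t) (auto split: option.splits)
lemma psf_map_par: "map_par g (psf c \<phi>) = psf (\<lambda>a. map_option g (c a)) (map_par g \<phi>)"
proof (induction \<phi> arbitrary: c)
  case (Ex x \<phi>)
  have "(\<lambda>a. map_option g (c a))(x := None) = (\<lambda>a. map_option g ((c(x := None)) a))" by (rule ext) auto
  thus ?case using Ex.IH by simp
qed (auto simp: pst_map_par)
lemma wf_pst[simp]: "wf_trm L (pst c t) = wf_trm L t"
  by (induction t) (auto split: option.splits)
lemma wf_psf[simp]: "wf_fm L (psf c \<phi>) = wf_fm L \<phi>"
  by (induction \<phi> arbitrary: c) auto
lemma fv_pst: "fv_trm (pst c t) \<subseteq> {v\<in>fv_trm t. c v = None}"
  by (induction t) (auto split: option.splits)
lemma fv_psf: "fv (psf c \<phi>) \<subseteq> {v\<in>fv \<phi>. c v = None}"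
proof (induction \<phi> arbitrary: c)
  case (Eq s t) thus ?case using fv_pst[of c s] fv_pst[of c t] by auto
next
  case (Rel r ts) thus ?case using fv_pst[of c] by fastforce
next
  case (Conj \<phi> \<psi>) thus ?case using Conj.IH[of c] by fastforce
next
  case (Ex x \<phi>) thus ?case using Ex.IH[of "c(x := None)"] by fastforce
qed auto
lemma params_pst: "params_trm (pst c t) \<subseteq> params_trm t \<union> {a. \<exists>v. c v = Some a}"
  by (induction t) (auto split: option.splits)
lemma params_psf: "params (psf c \<phi>) \<subseteq> params \<phi> \<union> {a. \<exists>v. c v = Some a}"
proof (induction \<phi> arbitrary: c)
  case (Eq s t) thus ?case using params_pst[of c s] params_pst[of c t] by auto
next
  case (Rel r ts) thus ?case using params_pst[of c] by fastforce
next
  case (Conj \<phi> \<psi>) thus ?case using Conj.IH[of c] by fastforce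
next
  case (Ex x \<phi>) thus ?case using Ex.IH[of "c(x := None)"] by (fastforce split: if_splits)
qed auto

fun Exs :: "'v list \<Rightarrow> ('f, 'r, 'v, 'p) fm \<Rightarrow> ('f, 'r, 'v, 'p) fm" where
  "Exs [] \<phi> = \<phi>"
| "Exs (x # xs) \<phi> = Ex x (Exs xs \<phi>)"

lemma sat_Exs: "sat M e (Exs xs \<phi>) \<longleftrightarrow>
   (\<exists>e'. (\<forall>v. v \<notin> set xs \<longrightarrow> e' v = e v) \<and> (\<forall>v\<in>set xs. e' v \<in> univ M) \<and> sat M e' \<phi>)"
proof (induction xs arbitrary: e)
  case Nil
  show ?case
  proof
    assume "sat M e (Exs [] \<phi>)" thus "\<exists>e'. (\<forall>v. v \<notin> set [] \<longrightarrow> e' v = e v) \<and> (\<forall>v\<in>set []. e' v \<in> univ M) \<and> sat M e' \<phi>"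
      by auto
  next
    assume "\<exists>e'. (\<forall>v. v \<notin> set [] \<longrightarrow> e' v = e v) \<and> (\<forall>v\<in>set []. e' v \<in> univ M) \<and> sat M e' \<phi>"
    then obtain e' where "\<forall>v. e' v = e v" "sat M e' \<phi>" by auto
    hence "e' = e" by auto
    thus "sat M e (Exs [] \<phi>)" using \<open>sat M e' \<phi>\<close> by simp
  qed
next
  case (Cons x xs)
  show ?case
  proof
    assume "sat M e (Exs (x # xs) \<phi>)"
    then obtain a where a: "a \<in> univ M" "sat M (e(x := a)) (Exs xs \<phi>)" by auto
    then obtain e' where e': "\<forall>v. v \<notin> set xs \<longrightarrow> e' v = (e(x := a)) v" "\<forall>v\<in>set xs. e' v \<in> univ M" "sat M e' \<phi>"
      using Cons.IH by blast
    show "\<exists>e'. (\<forall>v. v \<notin> set (x # xs) \<longrightarrow> e' v = e v) \<and> (\<forall>v\<in>set (x # xs). e' v \<in> univ M) \<and> sat M e' \<phi>"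
    proof (intro exI conjI)
      show "\<forall>v. v \<notin> set (x # xs) \<longrightarrow> e' v = e v" using e'(1) by auto
      show "\<forall>v\<in>set (x # xs). e' v \<in> univ M"
      proof
        fix v assume v: "v \<in> set (x # xs)"
        show "e' v \<in> univ M"
        proof (cases "v \<in> set xs")
          case False hence "v = x" using v by simp
          thus ?thesis using e'(1) False a(1) by auto
        qed (use e'(2) in auto)
      qed
    qed (rule e'(3))
  next
    assume "\<exists>e'. (\<forall>v. v \<notin> set (x # xs) \<longrightarrow> e' v = e v) \<and> (\<forall>v\<in>set (x # xs). e' v \<in> univ M) \<and> sat M e' \<phi>"
    then obtain e' where e': "\<forall>v. v \<notin> set (x # xs) \<longrightarrow> e' v = e v" "\<forall>v\<in>set (x # xs). e' v \<in> univ M" "sat M e' \<phi>"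
      by blast
    have "\<exists>e''. (\<forall>v. v \<notin> set xs \<longrightarrow> e'' v = (e(x := e' x)) v) \<and> (\<forall>v\<in>set xs. e'' v \<in> univ M) \<and> sat M e'' \<phi>"
      by (rule exI[of _ e']) (use e' in auto)
    hence "sat M (e(x := e' x)) (Exs xs \<phi>)" using Cons.IH by blast
    moreover have "e' x \<in> univ M" using e'(2) by simp
    ultimately show "sat M e (Exs (x # xs) \<phi>)" by auto
  qed
qed

lemma fv_Exs[simp]: "fv (Exs xs \<phi>) = fv \<phi> - set xs"
  by (induction xs) auto
lemma params_Exs[simp]: "params (Exs xs \<phi>) = params \<phi>"
  by (induction xs) auto
lemma wf_Exs[simp]: "wf_fm L (Exs xs \<phi>) = wf_fm L \<phi>"
  by (induction xs) auto
lemma map_par_Exs[simp]: "map_par g (Exs xs \<phi>) = Exs xs (map_par g \<phi>)"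
  by (induction xs) auto

fun Cj :: "('f, 'r, 'v, 'p) fm list \<Rightarrow> ('f, 'r, 'v, 'p) fm \<Rightarrow> ('f, 'r, 'v, 'p) fm" where
  "Cj [] b = b"
| "Cj (\<phi> # \<phi>s) b = Conj \<phi> (Cj \<phi>s b)"

lemma sat_Cj[simp]: "sat M e (Cj \<phi>s b) \<longleftrightarrow> (\<forall>\<phi>\<in>set \<phi>s. sat M e \<phi>) \<and> sat M e b"
  by (induction \<phi>s) auto
lemma fv_Cj[simp]: "fv (Cj \<phi>s b) = (\<Union>\<phi>\<in>set \<phi>s. fv \<phi>) \<union> fv b"
  by (induction \<phi>s) auto
lemma params_Cj[simp]: "params (Cj \<phi>s b) = (\<Union>\<phi>\<in>set \<phi>s. params \<phi>) \<union> params b"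
  by (induction \<phi>s) auto
lemma wf_Cj[simp]: "wf_fm L (Cj \<phi>s b) \<longleftrightarrow> (\<forall>\<phi>\<in>set \<phi>s. wf_fm L \<phi>) \<and> wf_fm L b"
  by (induction \<phi>s) auto
lemma map_par_Cj[simp]: "map_par g (Cj \<phi>s b) = Cj (map (map_par g) \<phi>s) (map_par g b)"
  by (induction \<phi>s) auto

lemma sat_closure:
  assumes e0: "assignment M e0" and fvs: "fv (Cj \<phi>s (Eq (Var v0) (Var v0))) \<subseteq> set vs"
  shows "sat M e0 (Exs vs (Cj \<phi>s (Eq (Var v0) (Var v0)))) \<longleftrightarrow>
    (\<exists>e. assignment M e \<and> (\<forall>\<phi>\<in>set \<phi>s. sat M e \<phi>))"
proof
  assume "sat M e0 (Exs vs (Cj \<phi>s (Eq (Var v0) (Var v0))))"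
  then obtain e' where e': "\<forall>v. v \<notin> set vs \<longrightarrow> e' v = e0 v" "\<forall>v\<in>set vs. e' v \<in> univ M"
    "sat M e' (Cj \<phi>s (Eq (Var v0) (Var v0)))" unfolding sat_Exs by blast
  have "assignment M e'" unfolding assignment_def
  proof
    fix v show "e' v \<in> univ M" using e' e0 unfolding assignment_def by (cases "v \<in> set vs") auto
  qed
  thus "\<exists>e. assignment M e \<and> (\<forall>\<phi>\<in>set \<phi>s. sat M e \<phi>)" using e'(3) by auto
next
  assume "\<exists>e. assignment M e \<and> (\<forall>\<phi>\<in>set \<phi>s. sat M e \<phi>)"
  then obtain e where e: "assignment M e" "\<forall>\<phi>\<in>set \<phi>s. sat M e \<phi>" by blast
  define e' where "e' = (\<lambda>v. if v \<in> set vs then e v else e0 v)"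
  have "sat M e' (Cj \<phi>s (Eq (Var v0) (Var v0))) = sat M e (Cj \<phi>s (Eq (Var v0) (Var v0)))"
    by (rule sat_cong) (use fvs in \<open>auto simp: e'_def\<close>)
  hence "sat M e' (Cj \<phi>s (Eq (Var v0) (Var v0)))" using e(2) by simp
  moreover have "\<forall>v. v \<notin> set vs \<longrightarrow> e' v = e0 v" "\<forall>v\<in>set vs. e' v \<in> univ M"
    using e(1) unfolding e'_def assignment_def by auto
  ultimately show "sat M e0 (Exs vs (Cj \<phi>s (Eq (Var v0) (Var v0))))" unfolding sat_Exs by blast
qed


definition finsat :: "('f, 'r, 'm) struct \<Rightarrow> ('f, 'r, 'v, 'm) fm set \<Rightarrow> bool" where
  "finsat M S \<longleftrightarrow> (\<forall>F\<subseteq>S. finite F \<longrightarrow> (\<exists>e. assignment M e \<and> (\<forall>\<phi>\<in>F. sat M e \<phi>)))"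

definition tbox :: "('f, 'r) lang \<Rightarrow> ('f, 'r, 'x + nat, unit) fm set \<Rightarrow> ('f, 'r, 'm) struct \<Rightarrow>
   ('f, 'r, 'x + nat, 'm) fm \<Rightarrow> ('f, 'r, 'x + nat, 'm) fm set set" where
  "tbox L \<pi> M \<phi> = {q \<in> types_pi L \<pi> M. \<phi> \<in> q}"

lemma finsatD: "finsat M S \<Longrightarrow> F \<subseteq> S \<Longrightarrow> finite F \<Longrightarrow> \<exists>e. assignment M e \<and> (\<forall>\<phi>\<in>F. sat M e \<phi>)"
  unfolding finsat_def by blast

lemma not_finsatE: "\<not> finsat M S \<Longrightarrow> (\<And>F. F \<subseteq> S \<Longrightarrow> finite F \<Longrightarrow> \<nexists>e. assignment M e \<and> (\<forall>\<phi>\<in>F. sat M e \<phi>) \<Longrightarrow> P) \<Longrightarrow> P"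
  unfolding finsat_def by blast

lemma types_finsat: "q \<in> types L M \<Longrightarrow> finsat M q"
  unfolding types_def finsat_def by blast

lemma LM_Neg: "\<phi> \<in> LM_formulas L M \<Longrightarrow> Neg \<phi> \<in> LM_formulas L M"
  unfolding LM_formulas_def by auto
lemma LM_Conj: "\<phi> \<in> LM_formulas L M \<Longrightarrow> \<psi> \<in> LM_formulas L M \<Longrightarrow> Conj \<phi> \<psi> \<in> LM_formulas L M"
  unfolding LM_formulas_def by auto

lemma finsat_sub: "finsat M S \<Longrightarrow> S' \<subseteq> S \<Longrightarrow> finsat M S'"
  unfolding finsat_def by blast

lemma types_Neg: assumes q: "q \<in> types L M" and \<phi>: "\<phi> \<in> LM_formulas L M"
  shows "Neg \<phi> \<in> q \<longleftrightarrow> \<phi> \<notin> q"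
proof
  assume "Neg \<phi> \<in> q"
  show "\<phi> \<notin> q"
  proof
    assume "\<phi> \<in> q"
    hence "\<exists>e. assignment M e \<and> (\<forall>\<psi>\<in>{\<phi>, Neg \<phi>}. sat M e \<psi>)"
      using finsatD[OF types_finsat[OF q], of "{\<phi>, Neg \<phi>}"] \<open>Neg \<phi> \<in> q\<close> by simp
    thus False by auto
  qed
next
  assume "\<phi> \<notin> q" thus "Neg \<phi> \<in> q" using q \<phi> unfolding types_def by blast
qed

lemma types_Conj: assumes q: "q \<in> types L M" and \<phi>: "\<phi> \<in> LM_formulas L M" and \<psi>: "\<psi> \<in> LM_formulas L M"
  shows "Conj \<phi> \<psi> \<in> q \<longleftrightarrow> \<phi> \<in> q \<and> \<psi> \<in> q"
proof
  assume c: "Conj \<phi> \<psi> \<in> q"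
  show "\<phi> \<in> q \<and> \<psi> \<in> q"
  proof (rule ccontr)
    assume "\<not> (\<phi> \<in> q \<and> \<psi> \<in> q)"
    hence "Neg \<phi> \<in> q \<or> Neg \<psi> \<in> q" using types_Neg[OF q \<phi>] types_Neg[OF q \<psi>] by blast
    then obtain ch where "Neg ch \<in> q" "ch = \<phi> \<or> ch = \<psi>" by blast
    hence "{Conj \<phi> \<psi>, Neg ch} \<subseteq> q" using c by blast
    hence "\<exists>e. assignment M e \<and> (\<forall>\<theta>\<in>{Conj \<phi> \<psi>, Neg ch}. sat M e \<theta>)"
      using finsatD[OF types_finsat[OF q]] by blast
    thus False using \<open>ch = \<phi> \<or> ch = \<psi>\<close> by auto
  qed
next
  assume a: "\<phi> \<in> q \<and> \<psi> \<in> q"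
  show "Conj \<phi> \<psi> \<in> q"
  proof (rule ccontr)
    assume "Conj \<phi> \<psi> \<notin> q"
    hence "Neg (Conj \<phi> \<psi>) \<in> q" using types_Neg[OF q LM_Conj[OF \<phi> \<psi>]] by blast
    hence "{\<phi>, \<psi>, Neg (Conj \<phi> \<psi>)} \<subseteq> q" using a by blast
    hence "\<exists>e. assignment M e \<and> (\<forall>\<theta>\<in>{\<phi>, \<psi>, Neg (Conj \<phi> \<psi>)}. sat M e \<theta>)"
      using finsatD[OF types_finsat[OF q]] by blast
    thus False by auto
  qed
qed

lemma extend_type:
  fixes S :: "('f, 'r, 'x + nat, 'm) fm set" and M :: "('f, 'r, 'm) struct"
  assumes S: "S \<subseteq> LM_formulas L M" and fs: "finsat M S"
  shows "\<exists>q\<in>types L M. S \<subseteq> q"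
proof -
  define A where "A = {R. S \<subseteq> R \<and> R \<subseteq> LM_formulas L M \<and> finsat M R}"
  have "A \<noteq> {}" using S fs unfolding A_def by blast
  moreover have "\<Union>C \<in> A" if C: "C \<noteq> {}" "subset.chain A C" for C
  proof -
    have CA: "C \<subseteq> A" using C(2) unfolding subset.chain_def by blast
    have "S \<subseteq> \<Union>C" using C(1) CA unfolding A_def by blast
    moreover have "\<Union>C \<subseteq> LM_formulas L M" using CA unfolding A_def by blast
    moreover have "finsat M (\<Union>C)" unfolding finsat_def
    proof (intro allI impI)
      fix F assume F: "F \<subseteq> \<Union>C" "finite F"
      then obtain R where R: "R \<in> C" "F \<subseteq> R" using finite_subset_Union_chain[OF F(2) F(1) C(1) C(2)] by metis
      have "finsat M R" using R CA unfolding A_def by blast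
      thus "\<exists>e. assignment M e \<and> (\<forall>\<phi>\<in>F. sat M e \<phi>)" using R F finsatD by blast
    qed
    ultimately show ?thesis unfolding A_def by blast
  qed
  ultimately obtain q where q: "q \<in> A" and max: "\<And>X. X \<in> A \<Longrightarrow> q \<subseteq> X \<Longrightarrow> X = q"
    using subset_Zorn_nonempty[of A] by blast
  have q1: "S \<subseteq> q" "q \<subseteq> LM_formulas L M" "finsat M q" using q unfolding A_def by auto
  have "q \<in> types L M"
    unfolding types_def
  proof (intro CollectI conjI ballI)
    show "q \<subseteq> LM_formulas L M" by (rule q1(2))
    show "\<forall>F\<subseteq>q. finite F \<longrightarrow> (\<exists>e. assignment M e \<and> (\<forall>\<phi>\<in>F. sat M e \<phi>))" using q1(3) unfolding finsat_def .
    fix \<phi> :: "('f, 'r, 'x + nat, 'm) fm" assume \<phi>: "\<phi> \<in> LM_formulas L M"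
    show "\<phi> \<in> q \<or> Neg \<phi> \<in> q"
    proof (rule ccontr)
      assume n: "\<not> (\<phi> \<in> q \<or> Neg \<phi> \<in> q)"
      have "\<not> finsat M (insert \<phi> q)"
      proof
        assume "finsat M (insert \<phi> q)"
        hence "insert \<phi> q \<in> A" using q1 \<phi> unfolding A_def by blast
        hence "insert \<phi> q = q" using max by blast
        thus False using n by blast
      qed
      then obtain F1 where F1: "F1 \<subseteq> insert \<phi> q" "finite F1" "\<nexists>e. assignment M e \<and> (\<forall>\<psi>\<in>F1. sat M e \<psi>)"
        by (rule not_finsatE)
      have "\<not> finsat M (insert (Neg \<phi>) q)"
      proof
        assume "finsat M (insert (Neg \<phi>) q)"
        hence "insert (Neg \<phi>) q \<in> A" using q1 LM_Neg[OF \<phi>] unfolding A_def by blast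
        hence "insert (Neg \<phi>) q = q" using max by blast
        thus False using n by blast
      qed
      then obtain F2 where F2: "F2 \<subseteq> insert (Neg \<phi>) q" "finite F2" "\<nexists>e. assignment M e \<and> (\<forall>\<psi>\<in>F2. sat M e \<psi>)"
        by (rule not_finsatE)
      have "(F1 \<union> F2) - {\<phi>, Neg \<phi>} \<subseteq> q" "finite ((F1 \<union> F2) - {\<phi>, Neg \<phi>})" using F1 F2 by auto
      then obtain e where e: "assignment M e" "\<forall>\<psi>\<in>(F1 \<union> F2) - {\<phi>, Neg \<phi>}. sat M e \<psi>"
        using finsatD[OF q1(3)] by blast
      show False
      proof (cases "sat M e \<phi>")
        case True
        hence "\<forall>\<psi>\<in>F1. sat M e \<psi>" using e(2) F1(1) n by auto
        thus False using F1(3) e(1) by blast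
      next
        case False
        hence "\<forall>\<psi>\<in>F2. sat M e \<psi>" using e(2) F2(1) n by auto
        thus False using F2(3) e(1) by blast
      qed
    qed
  qed
  thus ?thesis using q1(1) by blast
qed

lemma lift_LM: assumes "partial_type L \<pi>" "ch \<in> \<pi>" shows "lift ch \<in> LM_formulas L M"
proof -
  have "L_formula L ch" "fv ch \<subseteq> range Inl" using assms unfolding partial_type_def by auto
  thus ?thesis unfolding LM_formulas_def L_formula_def lift_def by auto
qed

lemma box_sub_iff:
  assumes pt: "partial_type L \<pi>" and \<phi>: "\<phi> \<in> LM_formulas L M" and \<psi>: "\<psi> \<in> LM_formulas L M"
  shows "tbox L \<pi> M \<phi> \<subseteq> tbox L \<pi> M \<psi> \<longleftrightarrow> \<not> finsat M (lift ` \<pi> \<union> {\<phi>, Neg \<psi>})"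
proof
  assume sub: "tbox L \<pi> M \<phi> \<subseteq> tbox L \<pi> M \<psi>"
  show "\<not> finsat M (lift ` \<pi> \<union> {\<phi>, Neg \<psi>})"
  proof
    assume fs: "finsat M (lift ` \<pi> \<union> {\<phi>, Neg \<psi>})"
    have "lift ` \<pi> \<union> {\<phi>, Neg \<psi>} \<subseteq> LM_formulas L M" using lift_LM[OF pt] \<phi> LM_Neg[OF \<psi>] by blast
    then obtain q where q: "q \<in> types L M" "lift ` \<pi> \<union> {\<phi>, Neg \<psi>} \<subseteq> q" using extend_type fs by blast
    hence "q \<in> tbox L \<pi> M \<phi>" unfolding tbox_def types_pi_def by blast
    hence "\<psi> \<in> q" using sub unfolding tbox_def by blast
    thus False using q types_Neg[OF q(1) \<psi>] by blast
  qed
next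
  assume nfs: "\<not> finsat M (lift ` \<pi> \<union> {\<phi>, Neg \<psi>})"
  show "tbox L \<pi> M \<phi> \<subseteq> tbox L \<pi> M \<psi>"
  proof
    fix q assume q: "q \<in> tbox L \<pi> M \<phi>"
    hence q1: "q \<in> types L M" "lift ` \<pi> \<subseteq> q" "\<phi> \<in> q" unfolding tbox_def types_pi_def by auto
    show "q \<in> tbox L \<pi> M \<psi>"
    proof (rule ccontr)
      assume "q \<notin> tbox L \<pi> M \<psi>"
      hence "Neg \<psi> \<in> q" using q q1 types_Neg[OF q1(1) \<psi>] unfolding tbox_def by auto
      hence "lift ` \<pi> \<union> {\<phi>, Neg \<psi>} \<subseteq> q" using q1 by blast
      thus False using nfs finsat_sub types_finsat[OF q1(1)] by blast
    qed
  qed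
qed

lemma box_sub: "tbox L \<pi> M \<phi> \<subseteq> types_pi L \<pi> M" unfolding tbox_def by blast

lemma box_Neg: assumes "\<phi> \<in> LM_formulas L M"
  shows "tbox L \<pi> M (Neg \<phi>) = types_pi L \<pi> M - tbox L \<pi> M \<phi>"
  using types_Neg[OF _ assms] unfolding tbox_def types_pi_def by blast

lemma box_Conj: assumes "\<phi> \<in> LM_formulas L M" "\<psi> \<in> LM_formulas L M"
  shows "tbox L \<pi> M (Conj \<phi> \<psi>) = tbox L \<pi> M \<phi> \<inter> tbox L \<pi> M \<psi>"
  using types_Conj[OF _ assms] unfolding tbox_def types_pi_def by blast

lemma box_compact:
  assumes pt: "partial_type L \<pi>" and \<phi>: "\<phi> \<in> LM_formulas L M" and \<Psi>: "\<Psi> \<subseteq> LM_formulas L M"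
    and cov: "tbox L \<pi> M \<phi> \<subseteq> \<Union>(tbox L \<pi> M ` \<Psi>)"
  shows "\<exists>\<Psi>'\<subseteq>\<Psi>. finite \<Psi>' \<and> tbox L \<pi> M \<phi> \<subseteq> \<Union>(tbox L \<pi> M ` \<Psi>')"
proof (rule ccontr)
  assume nf: "\<not> (\<exists>\<Psi>'\<subseteq>\<Psi>. finite \<Psi>' \<and> tbox L \<pi> M \<phi> \<subseteq> \<Union>(tbox L \<pi> M ` \<Psi>'))"
  let ?S = "lift ` \<pi> \<union> {\<phi>} \<union> Neg ` \<Psi>"
  have SLM: "?S \<subseteq> LM_formulas L M" using lift_LM[OF pt] \<phi> \<Psi> LM_Neg by blast
  have "finsat M ?S" unfolding finsat_def
  proof (intro allI impI)
    fix F assume F: "F \<subseteq> ?S" "finite F"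
    have "F \<inter> Neg ` \<Psi> \<subseteq> Neg ` \<Psi>" "finite (F \<inter> Neg ` \<Psi>)" using F by auto
    then obtain \<Psi>0 where \<Psi>0: "\<Psi>0 \<subseteq> \<Psi>" "finite \<Psi>0" "F \<inter> Neg ` \<Psi> = Neg ` \<Psi>0"
      using finite_subset_image by metis
    have "\<not> tbox L \<pi> M \<phi> \<subseteq> \<Union>(tbox L \<pi> M ` \<Psi>0)" using nf \<Psi>0(1,2) by blast
    then obtain q where q: "q \<in> tbox L \<pi> M \<phi>" "q \<notin> \<Union>(tbox L \<pi> M ` \<Psi>0)" by blast
    have q1: "q \<in> types L M" "lift ` \<pi> \<subseteq> q" "\<phi> \<in> q" using q(1) unfolding tbox_def types_pi_def by auto
    have "\<forall>\<psi>\<in>\<Psi>0. Neg \<psi> \<in> q"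
    proof
      fix \<psi> assume "\<psi> \<in> \<Psi>0"
      hence "\<psi> \<notin> q" "\<psi> \<in> LM_formulas L M" using q \<Psi>0 \<Psi> unfolding tbox_def by auto
      thus "Neg \<psi> \<in> q" using types_Neg[OF q1(1)] by blast
    qed
    have "F \<subseteq> q"
    proof
      fix ch assume ch: "ch \<in> F"
      show "ch \<in> q"
      proof (cases "ch \<in> Neg ` \<Psi>")
        case True
        hence "ch \<in> Neg ` \<Psi>0" using ch \<Psi>0(3) by blast
        thus ?thesis using \<open>\<forall>\<psi>\<in>\<Psi>0. Neg \<psi> \<in> q\<close> by blast
      next
        case False
        hence "ch \<in> lift ` \<pi> \<union> {\<phi>}" using ch F(1) by blast
        thus ?thesis using q1 by blast
      qed
    qed
    thus "\<exists>e. assignment M e \<and> (\<forall>\<phi>\<in>F. sat M e \<phi>)" using finsatD[OF types_finsat[OF q1(1)]] F by blast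
  qed
  then obtain q where q: "q \<in> types L M" "?S \<subseteq> q" using extend_type[OF SLM] by blast
  hence "q \<in> tbox L \<pi> M \<phi>" unfolding tbox_def types_pi_def by blast
  then obtain \<psi> where "\<psi> \<in> \<Psi>" "\<psi> \<in> q" using cov unfolding tbox_def by blast
  moreover have "Neg \<psi> \<in> q" using q \<open>\<psi> \<in> \<Psi>\<close> by blast
  ultimately show False using types_Neg[OF q(1)] \<Psi> by blast
qed

lemma stone_open_iff:
  shows "openin (stone_top L \<pi> M) U \<longleftrightarrow> U \<subseteq> types_pi L \<pi> M \<and>
    (\<forall>q\<in>U. \<exists>\<phi>\<in>LM_formulas L M. q \<in> tbox L \<pi> M \<phi> \<and> tbox L \<pi> M \<phi> \<subseteq> U)"
proof -
  let ?B = "{{q \<in> types_pi L \<pi> M. \<phi> \<in> q} | \<phi>. \<phi> \<in> LM_formulas L M}"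
  have gen: "\<forall>q\<in>V \<inter> types_pi L \<pi> M. \<exists>\<phi>\<in>LM_formulas L M. q \<in> tbox L \<pi> M \<phi> \<and> tbox L \<pi> M \<phi> \<subseteq> V"
    if "generate_topology_on ?B V" for V
    using that
  proof (induction rule: generate_topology_on.induct)
    case Empty thus ?case by simp
  next
    case (Int a b)
    show ?case
    proof
      fix q assume "q \<in> a \<inter> b \<inter> types_pi L \<pi> M"
      then obtain \<phi> \<psi> where "\<phi> \<in> LM_formulas L M" "q \<in> tbox L \<pi> M \<phi>" "tbox L \<pi> M \<phi> \<subseteq> a"
        "\<psi> \<in> LM_formulas L M" "q \<in> tbox L \<pi> M \<psi>" "tbox L \<pi> M \<psi> \<subseteq> b" using Int.IH by blast
      moreover have "tbox L \<pi> M (Conj \<phi> \<psi>) = tbox L \<pi> M \<phi> \<inter> tbox L \<pi> M \<psi>"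
        using box_Conj calculation by blast
      moreover have "Conj \<phi> \<psi> \<in> LM_formulas L M" using LM_Conj calculation by blast
      ultimately show "\<exists>\<phi>\<in>LM_formulas L M. q \<in> tbox L \<pi> M \<phi> \<and> tbox L \<pi> M \<phi> \<subseteq> a \<inter> b"
        by (intro bexI[of _ "Conj \<phi> \<psi>"]) blast+
    qed
  next
    case (UN K)
    show ?case
    proof
      fix q assume "q \<in> \<Union>K \<inter> types_pi L \<pi> M"
      then obtain k where "k \<in> K" "q \<in> k \<inter> types_pi L \<pi> M" by blast
      thus "\<exists>\<phi>\<in>LM_formulas L M. q \<in> tbox L \<pi> M \<phi> \<and> tbox L \<pi> M \<phi> \<subseteq> \<Union>K" using UN.IH by blast
    qed
  next
    case (Basis s)
    then obtain \<phi> where "\<phi> \<in> LM_formulas L M" "s = tbox L \<pi> M \<phi>" unfolding tbox_def by blast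
    thus ?case by blast
  qed
  show ?thesis
  proof
    assume "openin (stone_top L \<pi> M) U"
    then obtain V where V: "openin (topology_generated_by ?B) V" "U = V \<inter> types_pi L \<pi> M"
      unfolding stone_top_def openin_subtopology by blast
    show "U \<subseteq> types_pi L \<pi> M \<and> (\<forall>q\<in>U. \<exists>\<phi>\<in>LM_formulas L M. q \<in> tbox L \<pi> M \<phi> \<and> tbox L \<pi> M \<phi> \<subseteq> U)"
    proof (intro conjI ballI)
      show "U \<subseteq> types_pi L \<pi> M" using V by blast
      fix q assume "q \<in> U"
      then obtain \<phi> where "\<phi> \<in> LM_formulas L M" "q \<in> tbox L \<pi> M \<phi>" "tbox L \<pi> M \<phi> \<subseteq> V"
        using gen[OF openin_topology_generated_by[OF V(1)]] V(2) by blast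
      thus "\<exists>\<phi>\<in>LM_formulas L M. q \<in> tbox L \<pi> M \<phi> \<and> tbox L \<pi> M \<phi> \<subseteq> U" using V(2) box_sub by blast
    qed
  next
    assume a: "U \<subseteq> types_pi L \<pi> M \<and> (\<forall>q\<in>U. \<exists>\<phi>\<in>LM_formulas L M. q \<in> tbox L \<pi> M \<phi> \<and> tbox L \<pi> M \<phi> \<subseteq> U)"
    let ?K = "{tbox L \<pi> M \<phi> | \<phi>. \<phi> \<in> LM_formulas L M \<and> tbox L \<pi> M \<phi> \<subseteq> U}"
    have U: "U = \<Union>?K" using a by blast
    have "generate_topology_on ?B (\<Union>?K)"
      by (rule generate_topology_on.UN) (auto intro!: generate_topology_on.Basis simp: tbox_def)
    hence "openin (topology_generated_by ?B) (\<Union>?K)" by (simp add: openin_topology_generated_by_iff)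
    hence "openin (topology_generated_by ?B) U" using U by simp
    moreover have "U = U \<inter> types_pi L \<pi> M" using a by blast
    ultimately show "openin (stone_top L \<pi> M) U"
      unfolding stone_top_def openin_subtopology by blast
  qed
qed


lemma aut_bij: "\<sigma> \<in> Aut L N \<Longrightarrow> bij_betw \<sigma> (univ N) (univ N)"
  unfolding Aut_def by blast

lemma aut_fn: "\<sigma> \<in> Aut L N \<Longrightarrow> set xs \<subseteq> univ N \<Longrightarrow> length xs = fst L f \<Longrightarrow> \<sigma> (fint N f xs) = fint N f (map \<sigma> xs)"
  unfolding Aut_def by blast

lemma aut_rel: "\<sigma> \<in> Aut L N \<Longrightarrow> set xs \<subseteq> univ N \<Longrightarrow> length xs = snd L r \<Longrightarrow> rint N r (map \<sigma> xs) = rint N r xs"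
  unfolding Aut_def by blast

lemma struct_fn: "is_struct L N \<Longrightarrow> set xs \<subseteq> univ N \<Longrightarrow> length xs = fst L f \<Longrightarrow> fint N f xs \<in> univ N"
  unfolding is_struct_def by blast

lemma eval_univ:
  assumes N: "is_struct L N" and e: "assignment N e"
  shows "wf_trm L t \<Longrightarrow> params_trm t \<subseteq> univ N \<Longrightarrow> eval_trm N e t \<in> univ N"
proof (induction t)
  case (Var x) thus ?case using e unfolding assignment_def by simp
next
  case (Par a) thus ?case by simp
next
  case (Fn f ts)
  have "eval_trm N e t \<in> univ N" if "t \<in> set ts" for t
  proof (rule Fn.IH[OF that])
    show "wf_trm L t" using Fn.prems that by simp
    show "params_trm t \<subseteq> univ N" using Fn.prems that by auto
  qed
  hence "set (map (eval_trm N e) ts) \<subseteq> univ N" by auto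
  moreover have "length (map (eval_trm N e) ts) = fst L f" using Fn.prems by simp
  ultimately show ?case using struct_fn[OF N] by simp
qed

lemma aut_eval:
  assumes N: "is_struct L N" and s: "\<sigma> \<in> Aut L N" and e: "assignment N e"
  shows "wf_trm L t \<Longrightarrow> params_trm t \<subseteq> univ N \<Longrightarrow>
    eval_trm N (\<lambda>v. \<sigma> (e v)) (map_par_trm \<sigma> t) = \<sigma> (eval_trm N e t)"
proof (induction t)
  case (Fn f ts)
  have m: "map (eval_trm N (\<lambda>v. \<sigma> (e v))) (map (map_par_trm \<sigma>) ts) = map \<sigma> (map (eval_trm N e) ts)"
    unfolding map_map by (rule map_cong) (use Fn in auto)
  have "eval_trm N e t \<in> univ N" if "t \<in> set ts" for t
    using eval_univ[OF N e, of t] Fn.prems that by auto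
  hence "set (map (eval_trm N e) ts) \<subseteq> univ N" by auto
  moreover have "length (map (eval_trm N e) ts) = fst L f" using Fn.prems by simp
  ultimately have fa: "\<sigma> (fint N f (map (eval_trm N e) ts)) = fint N f (map \<sigma> (map (eval_trm N e) ts))"
    by (rule aut_fn[OF s])
  show ?case by (simp only: eval_trm.simps map_par_trm.simps m fa)
qed auto

lemma aut_sat:
  assumes N: "is_struct L N" and s: "\<sigma> \<in> Aut L N"
  shows "wf_fm L \<phi> \<Longrightarrow> params \<phi> \<subseteq> univ N \<Longrightarrow> assignment N e \<Longrightarrow>
    sat N (\<lambda>v. \<sigma> (e v)) (map_par \<sigma> \<phi>) = sat N e \<phi>"
proof (induction \<phi> arbitrary: e)
  case (Eq t1 t2)
  have inj: "inj_on \<sigma> (univ N)" using aut_bij[OF s] bij_betw_imp_inj_on by blast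
  have u: "eval_trm N e t1 \<in> univ N" "eval_trm N e t2 \<in> univ N" using Eq eval_univ[OF N] by auto
  have v: "eval_trm N (\<lambda>v. \<sigma> (e v)) (map_par_trm \<sigma> t1) = \<sigma> (eval_trm N e t1)"
    "eval_trm N (\<lambda>v. \<sigma> (e v)) (map_par_trm \<sigma> t2) = \<sigma> (eval_trm N e t2)"
    using Eq aut_eval[OF N s] by auto
  have "\<sigma> (eval_trm N e t1) = \<sigma> (eval_trm N e t2) \<longleftrightarrow> eval_trm N e t1 = eval_trm N e t2"
    using inj_onD[OF inj _ u] by auto
  thus ?case using v by simp
next
  case (Rel r ts)
  have m: "map (eval_trm N (\<lambda>v. \<sigma> (e v))) (map (map_par_trm \<sigma>) ts) = map \<sigma> (map (eval_trm N e) ts)"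
  proof -
    have "eval_trm N (\<lambda>v. \<sigma> (e v)) (map_par_trm \<sigma> t) = \<sigma> (eval_trm N e t)" if "t \<in> set ts" for t
      using aut_eval[OF N s Rel.prems(3), of t] Rel.prems(1,2) that by auto
    thus ?thesis unfolding map_map by (intro map_cong) auto
  qed
  have "eval_trm N e t \<in> univ N" if "t \<in> set ts" for t
    using eval_univ[OF N Rel.prems(3), of t] Rel.prems that by auto
  hence "set (map (eval_trm N e) ts) \<subseteq> univ N" by auto
  moreover have "length (map (eval_trm N e) ts) = snd L r" using Rel.prems by simp
  ultimately have ra: "rint N r (map \<sigma> (map (eval_trm N e) ts)) = rint N r (map (eval_trm N e) ts)"
    by (rule aut_rel[OF s])
  show ?case by (simp only: sat.simps map_par.simps m ra)
next
  case (Neg \<phi>) thus ?case by simp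
next
  case (Conj \<phi> \<psi>) thus ?case by simp
next
  case (Ex x \<phi>)
  have bij: "bij_betw \<sigma> (univ N) (univ N)" by (rule aut_bij[OF s])
  have eq: "(\<lambda>v. \<sigma> ((e(x := b)) v)) = (\<lambda>v. \<sigma> (e v))(x := \<sigma> b)" for b by (rule ext) simp
  have "sat N e (Ex x \<phi>) \<longleftrightarrow> (\<exists>b\<in>univ N. sat N (e(x := b)) \<phi>)" by simp
  also have "\<dots> \<longleftrightarrow> (\<exists>b\<in>univ N. sat N ((\<lambda>v. \<sigma> (e v))(x := \<sigma> b)) (map_par \<sigma> \<phi>))"
  proof -
    have "sat N (e(x := b)) \<phi> = sat N ((\<lambda>v. \<sigma> (e v))(x := \<sigma> b)) (map_par \<sigma> \<phi>)" if "b \<in> univ N" for b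
    proof -
      have a: "assignment N (e(x := b))" using Ex.prems(3) that unfolding assignment_def by auto
      have h: "sat N (\<lambda>v. \<sigma> ((e(x := b)) v)) (map_par \<sigma> \<phi>) = sat N (e(x := b)) \<phi>"
      proof -
        have w: "wf_fm L \<phi>" "params \<phi> \<subseteq> univ N" using Ex.prems by auto
        show ?thesis by (rule Ex.IH[OF w a])
      qed
      show ?thesis using h unfolding eq by (rule sym)
    qed
    thus ?thesis by blast
  qed
  also have "\<dots> \<longleftrightarrow> (\<exists>a\<in>univ N. sat N ((\<lambda>v. \<sigma> (e v))(x := a)) (map_par \<sigma> \<phi>))"
  proof -
    have im: "\<sigma> ` univ N = univ N" using bij unfolding bij_betw_def by blast
    show ?thesis
    proof
      assume "\<exists>b\<in>univ N. sat N ((\<lambda>v. \<sigma> (e v))(x := \<sigma> b)) (map_par \<sigma> \<phi>)"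
      then obtain b where "b \<in> univ N" "sat N ((\<lambda>v. \<sigma> (e v))(x := \<sigma> b)) (map_par \<sigma> \<phi>)" by blast
      moreover have "\<sigma> b \<in> univ N" using im \<open>b \<in> univ N\<close> by blast
      ultimately show "\<exists>a\<in>univ N. sat N ((\<lambda>v. \<sigma> (e v))(x := a)) (map_par \<sigma> \<phi>)" by blast
    next
      assume "\<exists>a\<in>univ N. sat N ((\<lambda>v. \<sigma> (e v))(x := a)) (map_par \<sigma> \<phi>)"
      then obtain a where a: "a \<in> univ N" "sat N ((\<lambda>v. \<sigma> (e v))(x := a)) (map_par \<sigma> \<phi>)" by blast
      then obtain b where "b \<in> univ N" "a = \<sigma> b" using im by (metis imageE)
      thus "\<exists>b\<in>univ N. sat N ((\<lambda>v. \<sigma> (e v))(x := \<sigma> b)) (map_par \<sigma> \<phi>)" using a by blast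
    qed
  qed
  also have "\<dots> \<longleftrightarrow> sat N (\<lambda>v. \<sigma> (e v)) (map_par \<sigma> (Ex x \<phi>))" by simp
  finally show ?case by simp
qed

lemma aut_assign: "\<sigma> \<in> Aut L N \<Longrightarrow> assignment N e \<Longrightarrow> assignment N (\<lambda>v. \<sigma> (e v))"
  using aut_bij unfolding assignment_def bij_betw_def by blast

lemma aut_inv_id: "\<sigma> \<in> Aut L N \<Longrightarrow> a \<in> univ N \<Longrightarrow> \<sigma> (inv_into (univ N) \<sigma> a) = a"
  using aut_bij unfolding bij_betw_def by (metis f_inv_into_f)

lemma aut_id_inv: "\<sigma> \<in> Aut L N \<Longrightarrow> a \<in> univ N \<Longrightarrow> inv_into (univ N) \<sigma> (\<sigma> a) = a"
  using aut_bij unfolding bij_betw_def by (metis inv_into_f_f)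

lemma aut_inv:
  assumes N: "is_struct L N" and s: "\<sigma> \<in> Aut L N"
  shows "inv_into (univ N) \<sigma> \<in> Aut L N"
proof -
  let ?t = "inv_into (univ N) \<sigma>"
  have bij: "bij_betw ?t (univ N) (univ N)" using bij_betw_inv_into[OF aut_bij[OF s]] .
  have tu: "\<And>a. a \<in> univ N \<Longrightarrow> ?t a \<in> univ N" using bij unfolding bij_betw_def by blast
  have fn: "?t (fint N f xs) = fint N f (map ?t xs)" if xs: "set xs \<subseteq> univ N" "length xs = fst L f" for f xs
  proof -
    let ?ys = "map ?t xs"
    have ys: "set ?ys \<subseteq> univ N" "length ?ys = fst L f" using xs tu by auto
    have "map \<sigma> ?ys = xs" unfolding map_map by (rule map_idI) (use xs aut_inv_id[OF s] in auto)
    hence "\<sigma> (fint N f ?ys) = fint N f xs" using aut_fn[OF s ys] by simp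
    hence "?t (\<sigma> (fint N f ?ys)) = ?t (fint N f xs)" by simp
    thus ?thesis using aut_id_inv[OF s struct_fn[OF N ys]] by simp
  qed
  have rl: "rint N r (map ?t xs) = rint N r xs" if xs: "set xs \<subseteq> univ N" "length xs = snd L r" for r xs
  proof -
    let ?ys = "map ?t xs"
    have ys: "set ?ys \<subseteq> univ N" "length ?ys = snd L r" using xs tu by auto
    have "map \<sigma> ?ys = xs" unfolding map_map by (rule map_idI) (use xs aut_inv_id[OF s] in auto)
    thus ?thesis using aut_rel[OF s ys] by simp
  qed
  show ?thesis unfolding Aut_def using bij fn rl by blast
qed

lemma map_par_inv:
  assumes "\<forall>a\<in>univ N. \<sigma>1 (\<sigma>2 a) = a" "params \<phi> \<subseteq> univ N"
  shows "map_par \<sigma>1 (map_par \<sigma>2 \<phi>) = \<phi>"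
proof -
  have "map_par \<sigma>1 (map_par \<sigma>2 \<phi>) = map_par (\<lambda>a. \<sigma>1 (\<sigma>2 a)) \<phi>" by (rule map_par_comp)
  also have "\<dots> = map_par (\<lambda>a. a) \<phi>" by (rule map_par_cong) (use assms in blast)
  finally show ?thesis by (simp add: map_par_id)
qed

lemma map_par_lift: assumes "params ch = {}" shows "map_par g (lift ch) = lift ch"
proof -
  have "map_par g (lift ch) = map_par (\<lambda>a. g undefined) ch" unfolding lift_def by (rule map_par_comp)
  also have "\<dots> = lift ch" unfolding lift_def by (rule map_par_cong) (use assms in auto)
  finally show ?thesis .
qed

lemma LM_map_par: "\<phi> \<in> LM_formulas L M \<Longrightarrow> g ` params \<phi> \<subseteq> univ N \<Longrightarrow> map_par g \<phi> \<in> LM_formulas L N"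
  unfolding LM_formulas_def by auto

lemma aut_LM: assumes s: "\<sigma> \<in> Aut L N" and \<phi>: "\<phi> \<in> LM_formulas L N" shows "map_par \<sigma> \<phi> \<in> LM_formulas L N"
proof -
  have u: "\<sigma> ` univ N \<subseteq> univ N" using aut_bij[OF s] unfolding bij_betw_def by blast
  show ?thesis using \<phi> u unfolding LM_formulas_def by auto
qed

lemma act_types_pi:
  fixes q :: "('f, 'r, 'x + nat, 'm) fm set" and N :: "('f, 'r, 'm) struct"
  assumes N: "is_struct L N" and s: "\<sigma> \<in> Aut L N" and pt: "partial_type L \<pi>" and q: "q \<in> types_pi L \<pi> N"
  shows "act_type \<sigma> q \<in> types_pi L \<pi> N"
proof -
  let ?t = "inv_into (univ N) \<sigma>"
  have t: "?t \<in> Aut L N" by (rule aut_inv[OF N s])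
  have q1: "q \<subseteq> LM_formulas L N" "\<forall>\<phi>\<in>LM_formulas L N. \<phi> \<in> q \<or> Neg \<phi> \<in> q" "finsat N q" "lift ` \<pi> \<subseteq> q"
    using q unfolding types_pi_def types_def finsat_def by auto
  have "act_type \<sigma> q \<subseteq> LM_formulas L N" unfolding act_type_def using q1(1) aut_LM[OF s] by blast
  moreover have "\<forall>\<phi>\<in>LM_formulas L N. \<phi> \<in> act_type \<sigma> q \<or> Neg \<phi> \<in> act_type \<sigma> q"
  proof
    fix \<phi> :: "('f, 'r, 'x + nat, 'm) fm" assume \<phi>: "\<phi> \<in> LM_formulas L N"
    have \<phi>': "map_par ?t \<phi> \<in> LM_formulas L N" by (rule aut_LM[OF t \<phi>])
    have eq: "map_par \<sigma> (map_par ?t \<phi>) = \<phi>"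
      by (rule map_par_inv) (use aut_inv_id[OF s] \<phi> in \<open>auto simp: LM_formulas_def\<close>)
    show "\<phi> \<in> act_type \<sigma> q \<or> Neg \<phi> \<in> act_type \<sigma> q"
    proof (cases "map_par ?t \<phi> \<in> q")
      case True thus ?thesis unfolding act_type_def using eq by (metis image_eqI)
    next
      case False
      hence "Neg (map_par ?t \<phi>) \<in> q" using q1(2) \<phi>' by blast
      hence "map_par \<sigma> (Neg (map_par ?t \<phi>)) \<in> act_type \<sigma> q" unfolding act_type_def by blast
      thus ?thesis using eq by simp
    qed
  qed
  moreover have "\<forall>F\<subseteq>act_type \<sigma> q. finite F \<longrightarrow> (\<exists>e. assignment N e \<and> (\<forall>\<phi>\<in>F. sat N e \<phi>))"
  proof (intro allI impI)
    fix F assume F: "F \<subseteq> act_type \<sigma> q" "finite F"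
    then obtain F0 where F0: "F0 \<subseteq> q" "finite F0" "F = map_par \<sigma> ` F0"
      unfolding act_type_def using finite_subset_image by metis
    obtain e where e: "assignment N e" "\<forall>\<phi>\<in>F0. sat N e \<phi>" using finsatD[OF q1(3) F0(1,2)] by blast
    have "\<forall>\<phi>\<in>F. sat N (\<lambda>v. \<sigma> (e v)) \<phi>"
    proof
      fix \<phi> assume "\<phi> \<in> F"
      then obtain \<psi> where \<psi>: "\<psi> \<in> F0" "\<phi> = map_par \<sigma> \<psi>" using F0 by blast
      have "\<psi> \<in> LM_formulas L N" using \<psi> F0 q1(1) by blast
      hence "sat N (\<lambda>v. \<sigma> (e v)) (map_par \<sigma> \<psi>) = sat N e \<psi>"
        using aut_sat[OF N s _ _ e(1)] unfolding LM_formulas_def by blast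
      thus "sat N (\<lambda>v. \<sigma> (e v)) \<phi>" using \<psi> e(2) by simp
    qed
    thus "\<exists>e. assignment N e \<and> (\<forall>\<phi>\<in>F. sat N e \<phi>)" using aut_assign[OF s e(1)] by blast
  qed
  moreover have "lift ` \<pi> \<subseteq> act_type \<sigma> q"
  proof
    fix \<phi> :: "('f, 'r, 'x + nat, 'm) fm" assume "\<phi> \<in> lift ` \<pi>"
    then obtain ch where ch: "ch \<in> \<pi>" "\<phi> = lift ch" by blast
    have "params ch = {}" using pt ch unfolding partial_type_def L_formula_def by blast
    hence "map_par \<sigma> (lift ch) = lift ch" by (rule map_par_lift)
    moreover have "lift ch \<in> q" using q1(4) ch by blast
    ultimately show "\<phi> \<in> act_type \<sigma> q" unfolding act_type_def using ch by (metis image_eqI)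
  qed
  ultimately show ?thesis unfolding types_pi_def types_def by blast
qed

lemma act_act:
  assumes "\<forall>a\<in>univ N. \<sigma>1 (\<sigma>2 a) = a" "q \<subseteq> LM_formulas L N"
  shows "act_type \<sigma>1 (act_type \<sigma>2 q) = q"
proof -
  have "act_type \<sigma>1 (act_type \<sigma>2 q) = (\<lambda>\<phi>. map_par \<sigma>1 (map_par \<sigma>2 \<phi>)) ` q"
    unfolding act_type_def by (simp add: image_image)
  also have "\<dots> = (\<lambda>\<phi>. \<phi>) ` q"
  proof (rule image_cong[OF refl])
    fix \<phi> assume "\<phi> \<in> q"
    hence "params \<phi> \<subseteq> univ N" using assms(2) unfolding LM_formulas_def by blast
    thus "map_par \<sigma>1 (map_par \<sigma>2 \<phi>) = \<phi>" using map_par_inv[of N \<sigma>1 \<sigma>2 \<phi>] assms(1) by blast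
  qed
  finally show ?thesis by simp
qed

lemma types_pi_LM: "q \<in> types_pi L \<pi> N \<Longrightarrow> q \<subseteq> LM_formulas L N"
  unfolding types_pi_def types_def by blast

lemma act_box:
  fixes \<phi> :: "('f, 'r, 'x + nat, 'm) fm" and N :: "('f, 'r, 'm) struct"
  assumes N: "is_struct L N" and s: "\<sigma> \<in> Aut L N" and pt: "partial_type L \<pi>" and \<phi>: "\<phi> \<in> LM_formulas L N"
  shows "act_type \<sigma> ` tbox L \<pi> N \<phi> = tbox L \<pi> N (map_par \<sigma> \<phi>)"
proof
  show "act_type \<sigma> ` tbox L \<pi> N \<phi> \<subseteq> tbox L \<pi> N (map_par \<sigma> \<phi>)"
    unfolding tbox_def using act_types_pi[OF N s pt] unfolding act_type_def by blast
  show "tbox L \<pi> N (map_par \<sigma> \<phi>) \<subseteq> act_type \<sigma> ` tbox L \<pi> N \<phi>"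
  proof
    let ?t = "inv_into (univ N) \<sigma>"
    have t: "?t \<in> Aut L N" by (rule aut_inv[OF N s])
    fix q' assume q': "q' \<in> tbox L \<pi> N (map_par \<sigma> \<phi>)"
    hence q'1: "q' \<in> types_pi L \<pi> N" "map_par \<sigma> \<phi> \<in> q'" unfolding tbox_def by auto
    let ?q = "act_type ?t q'"
    have "?q \<in> types_pi L \<pi> N" by (rule act_types_pi[OF N t pt q'1(1)])
    moreover have "map_par ?t (map_par \<sigma> \<phi>) = \<phi>"
      by (rule map_par_inv) (use aut_id_inv[OF s] \<phi> in \<open>auto simp: LM_formulas_def\<close>)
    hence "\<phi> \<in> ?q" using q'1(2) unfolding act_type_def by (metis image_eqI)
    moreover have "act_type \<sigma> ?q = q'"
      by (rule act_act[OF _ types_pi_LM[OF q'1(1)]]) (use aut_inv_id[OF s] in blast)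
    ultimately show "q' \<in> act_type \<sigma> ` tbox L \<pi> N \<phi>" unfolding tbox_def by force
  qed
qed


lemma sentence_sat: "fv \<phi> = {} \<Longrightarrow> sat N e \<phi> = sat N e' \<phi>"
  by (rule sat_cong) simp

lemma struct_ne: "is_struct L N \<Longrightarrow> univ N \<noteq> {}"
  unfolding is_struct_def by blast

lemma some_assign: "is_struct L N \<Longrightarrow> assignment N (\<lambda>_. SOME a. a \<in> univ N)"
  unfolding assignment_def using struct_ne by (metis some_in_eq)

locale transfer =
  fixes L :: "('f, 'r) lang" and T :: "('f, 'r, 'x + nat, unit) fm set"
    and \<pi> :: "('f, 'r, 'x + nat, unit) fm set"
    and M :: "('f, 'r, 'm) struct" and M' :: "('f, 'r, 'n) struct"
  assumes complete: "complete_theory L T" and pt: "partial_type L \<pi>"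
    and modM: "is_model L T M" and satM: "aleph0_saturated L M"
    and modM': "is_model L T M'"
begin

lemma strM: "is_struct L M" using modM unfolding is_model_def by blast
lemma strM': "is_struct L M'" using modM' unfolding is_model_def by blast

definition e0 :: "nat \<Rightarrow> 'm" where "e0 = (\<lambda>_. SOME a. a \<in> univ M)"
definition e0' :: "nat \<Rightarrow> 'n" where "e0' = (\<lambda>_. SOME a. a \<in> univ M')"

lemma e0: "assignment M e0" unfolding e0_def by (rule some_assign[OF strM])
lemma e0': "assignment M' e0'" unfolding e0'_def by (rule some_assign[OF strM'])

definition elemP :: "'n set \<Rightarrow> ('n \<Rightarrow> 'm) \<Rightarrow> bool" where
  "elemP A g \<longleftrightarrow> A \<subseteq> univ M' \<and> g ` A \<subseteq> univ M \<and>
     (\<forall>\<phi>::('f, 'r, nat, 'n) fm. wf_fm L \<phi> \<and> params \<phi> \<subseteq> A \<and> fv \<phi> = {} \<longrightarrow>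
        (sat M' e0' \<phi> \<longleftrightarrow> sat M e0 (map_par g \<phi>)))"

lemma elemPD: "elemP A g \<Longrightarrow> wf_fm L \<phi> \<Longrightarrow> params \<phi> \<subseteq> A \<Longrightarrow> fv \<phi> = {} \<Longrightarrow>
   sat M' e0' \<phi> \<longleftrightarrow> sat M e0 (map_par g \<phi>)"
  unfolding elemP_def by blast

lemma elemP_mono: "elemP A g \<Longrightarrow> B \<subseteq> A \<Longrightarrow> elemP B g"
  unfolding elemP_def by blast

lemma pure_sentence:
  fixes N :: "('f, 'r, 'k) struct" and \<phi> :: "('f, 'r, nat, 'p) fm" and g :: "'p \<Rightarrow> 'k"
  assumes N: "is_model L T N" and wf: "wf_fm L \<phi>" and pe: "params \<phi> = {}" and fe: "fv \<phi> = {}"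
  shows "sat N e (map_par g \<phi>) \<longleftrightarrow> trf (Inr :: nat \<Rightarrow> 'x + nat) Inr (map_par (\<lambda>_. ()) \<phi>) \<in> T"
proof -
  let ?\<psi> = "map_par (\<lambda>_. ()) \<phi>"
  let ?\<theta> = "trf (Inr :: nat \<Rightarrow> 'x + nat) (Inr :: unit \<Rightarrow> ('x + nat) + unit) ?\<psi>"
  have ps: "params ?\<psi> = {}" using pe by simp
  have sent: "L_sentence L ?\<theta>"
    unfolding L_sentence_def L_formula_def
  proof (intro conjI)
    show "wf_fm L ?\<theta>" using wf by simp
    show "params ?\<theta> = {}" unfolding params_trf using ps by auto
    show "fv ?\<theta> = {}" using fv_trf[of Inr Inr ?\<psi>] fe ps by (auto simp: Kw_def)
  qed
  have strN: "is_struct L N" using N unfolding is_model_def by blast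
  define ea :: "'x + nat \<Rightarrow> 'k" where "ea = (\<lambda>_. SOME a. a \<in> univ N)"
  have ea: "assignment N ea" unfolding ea_def by (rule some_assign[OF strN])
  have eval: "sat N ea (lift ?\<theta>) \<longleftrightarrow> sat N e (map_par g \<phi>)"
  proof -
    have h1: "lift ?\<theta> = trf Inr (\<lambda>a. map_sum (\<lambda>a. a) (\<lambda>_. undefined) (Inr a)) ?\<psi>"
      unfolding lift_def by (rule trf_map_par)
    have h2: "sat N ea (trf Inr (\<lambda>a. map_sum (\<lambda>a. a) (\<lambda>_. undefined) (Inr a)) ?\<psi>) = sat N (\<lambda>v. ea (Inr v)) (map_par (kval (\<lambda>a. map_sum (\<lambda>a. a) (\<lambda>_::unit. undefined::'k) (Inr a)) ea) ?\<psi>)"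
      by (rule sat_trf) (auto simp: Kw_def)
    have "sat N ea (lift ?\<theta>) = sat N (\<lambda>v. ea (Inr v)) (map_par (kval (\<lambda>a. map_sum (\<lambda>a. a) (\<lambda>_::unit. undefined::'k) (Inr a)) ea) ?\<psi>)"
      unfolding h1 by (rule h2)
    also have "map_par (kval (\<lambda>a. map_sum (\<lambda>a. a) (\<lambda>_. undefined) (Inr a)) ea) ?\<psi> = map_par g \<phi>"
      unfolding map_par_comp by (rule map_par_cong) (use pe in auto)
    also have "sat N (\<lambda>v. ea (Inr v)) (map_par g \<phi>) = sat N e (map_par g \<phi>)"
      by (rule sentence_sat) (simp add: fe)
    finally show ?thesis .
  qed
  show ?thesis
  proof
    assume s: "sat N e (map_par g \<phi>)"
    show "?\<theta> \<in> T"
    proof (rule ccontr)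
      assume "?\<theta> \<notin> T"
      hence "Neg ?\<theta> \<in> T" using complete sent unfolding complete_theory_def by blast
      hence "sat N ea (lift (Neg ?\<theta>))" using N ea unfolding is_model_def by blast
      hence "\<not> sat N ea (lift ?\<theta>)" unfolding lift_def by simp
      thus False using eval s by simp
    qed
  next
    assume "?\<theta> \<in> T"
    hence "sat N ea (lift ?\<theta>)" using N ea unfolding is_model_def by blast
    thus "sat N e (map_par g \<phi>)" using eval by simp
  qed
qed

lemma elem_empty: "elemP {} g"
  unfolding elemP_def
proof (intro conjI allI impI)
  fix \<phi> :: "('f, 'r, nat, 'n) fm" assume a: "wf_fm L \<phi> \<and> params \<phi> \<subseteq> {} \<and> fv \<phi> = {}"
  have "sat M' e0' \<phi> = sat M' e0' (map_par (\<lambda>a. a) \<phi>)" by (simp add: map_par_id)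
  also have "\<dots> \<longleftrightarrow> trf (Inr :: nat \<Rightarrow> 'x + nat) Inr (map_par (\<lambda>_. ()) \<phi>) \<in> T"
    by (rule pure_sentence[OF modM']) (use a in auto)
  also have "\<dots> \<longleftrightarrow> sat M e0 (map_par g \<phi>)"
    by (rule pure_sentence[OF modM, symmetric]) (use a in auto)
  finally show "sat M' e0' \<phi> \<longleftrightarrow> sat M e0 (map_par g \<phi>)" .
qed auto


lemma abs_sat:
  fixes \<phi> :: "('f, 'r, nat, 'p) fm" and N :: "('f, 'r, 'k) struct"
  assumes fe: "fv \<phi> = {}"
  shows "sat N e (trf Suc (\<lambda>a. if a = c then Inl 0 else Inr (h a)) \<phi>) \<longleftrightarrow>
         sat N e1 (map_par (\<lambda>a. if a = c then e 0 else h a) \<phi>)"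
proof -
  have "sat N e (trf Suc (\<lambda>a. if a = c then Inl 0 else Inr (h a)) \<phi>) =
    sat N (\<lambda>v. e (Suc v)) (map_par (kval (\<lambda>a. if a = c then Inl 0 else Inr (h a)) e) \<phi>)"
    by (rule sat_trf) (auto simp: Kw_def split: if_splits)
  also have "map_par (kval (\<lambda>a. if a = c then Inl 0 else Inr (h a)) e) \<phi> = map_par (\<lambda>a. if a = c then e 0 else h a) \<phi>"
    by (rule map_par_cong) (auto simp: kval_def)
  also have "sat N (\<lambda>v. e (Suc v)) (map_par (\<lambda>a. if a = c then e 0 else h a) \<phi>) = sat N e1 (map_par (\<lambda>a. if a = c then e 0 else h a) \<phi>)"
    by (rule sentence_sat) (simp add: fe)
  finally show ?thesis .
qed

lemma abs_props:
  fixes \<phi> :: "('f, 'r, nat, 'p) fm"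
  assumes "fv \<phi> = {}" "params \<phi> \<subseteq> insert c A" "c \<notin> A"
  shows "fv (trf Suc (\<lambda>a. if a = c then Inl 0 else Inr a) \<phi>) \<subseteq> {0}"
    and "params (trf Suc (\<lambda>a. if a = c then Inl 0 else Inr a) \<phi>) \<subseteq> A"
proof -
  show "fv (trf Suc (\<lambda>a. if a = c then Inl 0 else Inr a) \<phi>) \<subseteq> {0}"
    using fv_trf[of Suc "\<lambda>a. if a = c then Inl 0 else Inr a" \<phi>] assms(1)
    by (auto simp: Kw_def split: if_splits)
  show "params (trf Suc (\<lambda>a. if a = c then Inl 0 else Inr a) \<phi>) \<subseteq> A"
    unfolding params_trf using assms(2) by (auto split: if_splits)
qed

lemma elem_step:
  assumes g: "elemP A g" "finite A" and a': "a' \<in> univ M'"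
  shows "\<exists>b\<in>univ M. elemP (insert a' A) (g(a' := b))"
proof (cases "a' \<in> A")
  case True
  have "g a' \<in> univ M" using g True unfolding elemP_def by blast
  moreover have "g(a' := g a') = g" by simp
  moreover have "insert a' A = A" using True by blast
  ultimately show ?thesis using g by metis
next
  case False
  define src where "src = {\<psi> :: ('f, 'r, nat, 'n) fm. wf_fm L \<psi> \<and> params \<psi> \<subseteq> A \<and> fv \<psi> \<subseteq> {0} \<and> sat M' (e0'(0 := a')) \<psi>}"
  define p where "p = map_par g ` src"
  have gA: "g ` A \<subseteq> univ M" "A \<subseteq> univ M'" using g(1) unfolding elemP_def by auto
  have "\<exists>e. assignment M e \<and> (\<forall>\<phi>\<in>p. sat M e \<phi>)"
  proof (rule satM[unfolded aleph0_saturated_def, rule_format, of "g ` A"], intro conjI)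
    show "finite (g ` A)" using g(2) by simp
    show "g ` A \<subseteq> univ M" by (rule gA(1))
    show "\<forall>\<phi>\<in>p. wf_fm L \<phi> \<and> params \<phi> \<subseteq> g ` A \<and> fv \<phi> \<subseteq> {0}"
      unfolding p_def src_def by auto
    show "\<forall>F\<subseteq>p. finite F \<longrightarrow> (\<exists>e. assignment M e \<and> (\<forall>\<phi>\<in>F. sat M e \<phi>))"
    proof (intro allI impI)
      fix F assume F: "F \<subseteq> p" "finite F"
      then obtain F0 where F0: "F0 \<subseteq> src" "finite F0" "F = map_par g ` F0"
        unfolding p_def using finite_subset_image by metis
      obtain xs where xs: "set xs = F0" using finite_list[OF F0(2)] by blast
      define \<theta> :: "('f, 'r, nat, 'n) fm" where "\<theta> = Ex 0 (Cj xs (Eq (Var 0) (Var 0)))"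
      have th: "wf_fm L \<theta>" "params \<theta> \<subseteq> A" "fv \<theta> = {}"
        using F0(1) xs unfolding \<theta>_def src_def by auto
      have "sat M' e0' \<theta>"
      proof -
        have "sat M' (e0'(0 := a')) (Cj xs (Eq (Var 0) (Var 0)))" using F0(1) xs unfolding src_def by auto
        thus ?thesis unfolding \<theta>_def using a' by auto
      qed
      hence "sat M e0 (map_par g \<theta>)" using elemPD[OF g(1) th] by simp
      then obtain a where a: "a \<in> univ M" "sat M (e0(0 := a)) (Cj (map (map_par g) xs) (Eq (Var 0) (Var 0)))"
        unfolding \<theta>_def by auto
      have "assignment M (e0(0 := a))" using e0 a(1) unfolding assignment_def by auto
      moreover have "\<forall>\<phi>\<in>F. sat M (e0(0 := a)) \<phi>" using a(2) F0(3) xs by auto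
      ultimately show "\<exists>e. assignment M e \<and> (\<forall>\<phi>\<in>F. sat M e \<phi>)" by blast
    qed
  qed
  then obtain e where e: "assignment M e" "\<forall>\<phi>\<in>p. sat M e \<phi>" by blast
  define b where "b = e 0"
  have b: "b \<in> univ M" using e(1) unfolding b_def assignment_def by blast
  have "elemP (insert a' A) (g(a' := b))"
    unfolding elemP_def
  proof (intro conjI allI impI)
    show "insert a' A \<subseteq> univ M'" using a' gA by blast
    show "(g(a' := b)) ` insert a' A \<subseteq> univ M" using b gA False by auto
    fix \<phi> :: "('f, 'r, nat, 'n) fm" assume \<phi>: "wf_fm L \<phi> \<and> params \<phi> \<subseteq> insert a' A \<and> fv \<phi> = {}"
    define \<psi> where "\<psi> = trf Suc (\<lambda>a. if a = a' then Inl 0 else Inr a) \<phi>"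
    have \<psi>: "wf_fm L \<psi>" "params \<psi> \<subseteq> A" "fv \<psi> \<subseteq> {0}"
      unfolding \<psi>_def using \<phi> abs_props[of \<phi> a' A] False by auto
    have s1: "sat M' (e0'(0 := a')) \<psi> \<longleftrightarrow> sat M' e0' \<phi>"
    proof -
      have "sat M' (e0'(0 := a')) \<psi> \<longleftrightarrow> sat M' e0' (map_par (\<lambda>a. if a = a' then (e0'(0 := a')) 0 else a) \<phi>)"
        unfolding \<psi>_def using abs_sat[of \<phi> M' "e0'(0 := a')" a' "\<lambda>a. a" e0'] \<phi> by simp
      also have "map_par (\<lambda>a. if a = a' then (e0'(0 := a')) 0 else a) \<phi> = map_par (\<lambda>a. a) \<phi>"
        by (rule map_par_cong) auto
      finally show ?thesis by (simp only: map_par_id)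
    qed
    have mg: "map_par g \<psi> = trf Suc (\<lambda>a. if a = a' then Inl 0 else Inr (g a)) \<phi>"
    proof -
      have "map_par g \<psi> = trf Suc (\<lambda>a. map_sum (\<lambda>a. a) g (if a = a' then Inl 0 else Inr a)) \<phi>"
        unfolding \<psi>_def by (rule trf_map_par)
      also have "(\<lambda>a. map_sum (\<lambda>a. a) g (if a = a' then Inl 0 else Inr a)) = (\<lambda>a. if a = a' then Inl 0 else Inr (g a))"
        by (rule ext) auto
      finally show ?thesis .
    qed
    have s2: "sat M e (map_par g \<psi>) \<longleftrightarrow> sat M e0 (map_par (g(a' := b)) \<phi>)"
    proof -
      have "sat M e (map_par g \<psi>) \<longleftrightarrow> sat M e0 (map_par (\<lambda>a. if a = a' then e 0 else g a) \<phi>)"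
        unfolding mg by (rule abs_sat) (use \<phi> in simp)
      also have "map_par (\<lambda>a. if a = a' then e 0 else g a) \<phi> = map_par (g(a' := b)) \<phi>"
        by (rule map_par_cong) (auto simp: b_def)
      finally show ?thesis .
    qed
    show "sat M' e0' \<phi> \<longleftrightarrow> sat M e0 (map_par (g(a' := b)) \<phi>)"
    proof (cases "sat M' e0' \<phi>")
      case True
      hence "\<psi> \<in> src" unfolding src_def using \<psi> s1 by blast
      hence "sat M e (map_par g \<psi>)" using e(2) unfolding p_def by blast
      thus ?thesis using True s2 by simp
    next
      case f: False
      hence "Neg \<psi> \<in> src" unfolding src_def using \<psi> s1 by simp
      hence "sat M e (map_par g (Neg \<psi>))" using e(2) unfolding p_def by blast
      thus ?thesis using f s2 by simp
    qed
  qed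
  thus ?thesis using b by blast
qed

lemma elem_exists: "finite A \<Longrightarrow> A \<subseteq> univ M' \<Longrightarrow> \<exists>g. elemP A g"
proof (induction A rule: finite_induct)
  case empty show ?case using elem_empty by blast
next
  case (insert a A)
  then obtain g where "elemP A g" by blast
  thus ?case using elem_step[of A g a] insert by blast
qed

lemma transfer_sat:
  fixes \<Phi> :: "('f, 'r, 'x + nat, 'n) fm set"
  assumes g: "elemP A g" and fin: "finite \<Phi>" and \<Phi>: "\<forall>\<phi>\<in>\<Phi>. wf_fm L \<phi> \<and> params \<phi> \<subseteq> A"
  shows "(\<exists>e. assignment M' e \<and> (\<forall>\<phi>\<in>\<Phi>. sat M' e \<phi>)) \<longleftrightarrow>
         (\<exists>e. assignment M e \<and> (\<forall>\<phi>\<in>\<Phi>. sat M e (map_par g \<phi>)))"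
proof -
  obtain xs where xs: "set xs = \<Phi>" using finite_list[OF fin] by blast
  define c where "c = Cj xs (Eq (Var (Inr 0)) (Var (Inr 0)))"
  obtain vs where vs: "set vs = fv c" using finite_list[OF finite_fv[of c]] by blast
  define ch where "ch = Exs vs c"
  obtain \<rho> :: "'x + nat \<Rightarrow> nat" and n where "\<rho> ` vars ch = {i. i < n}" and \<rho>: "inj_on \<rho> (vars ch)"
    using finite_imp_inj_to_nat_seg[OF finite_vars[of ch]] by blast
  define \<theta> where "\<theta> = trf \<rho> (Inr :: 'n \<Rightarrow> nat + 'n) ch"
  have fvch: "fv ch = {}" unfolding ch_def using vs by simp
  have th: "wf_fm L \<theta>" "params \<theta> \<subseteq> A" "fv \<theta> = {}"
  proof -
    show "wf_fm L \<theta>" unfolding \<theta>_def ch_def c_def using \<Phi> xs by auto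
    show "params \<theta> \<subseteq> A" unfolding \<theta>_def params_trf ch_def c_def using \<Phi> xs by auto
    show "fv \<theta> = {}" using fv_trf[of \<rho> Inr ch] fvch unfolding \<theta>_def by (auto simp: Kw_def)
  qed
  have KwI: "Kw (Inr :: 'n \<Rightarrow> nat + 'n) P = {}" for P by (auto simp: Kw_def)
  have KwI2: "Kw (\<lambda>a::'n. Inr (g a) :: nat + 'm) P = {}" for P by (auto simp: Kw_def)
  have "sat M' e0' \<theta> \<longleftrightarrow> sat M' (\<lambda>v. e0' (\<rho> v)) (map_par (kval Inr e0') ch)"
    unfolding \<theta>_def by (rule sat_trf[OF \<rho>]) (simp add: KwI)
  also have "map_par (kval Inr e0') ch = ch"
    by (subst map_par_cong[of ch _ "\<lambda>a. a"]) (auto simp: kval_def map_par_id)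
  also have "sat M' (\<lambda>v. e0' (\<rho> v)) ch \<longleftrightarrow> (\<exists>e. assignment M' e \<and> (\<forall>\<phi>\<in>set xs. sat M' e \<phi>))"
    unfolding ch_def c_def
    by (rule sat_closure) (use e0' vs c_def in \<open>auto simp: assignment_def\<close>)
  finally have l: "sat M' e0' \<theta> \<longleftrightarrow> (\<exists>e. assignment M' e \<and> (\<forall>\<phi>\<in>\<Phi>. sat M' e \<phi>))" using xs by simp
  have "map_par g \<theta> = trf \<rho> (\<lambda>a. map_sum (\<lambda>a. a) g (Inr a)) ch" unfolding \<theta>_def by (rule trf_map_par)
  also have "(\<lambda>a. map_sum (\<lambda>a. a) g (Inr a)) = (\<lambda>a. Inr (g a))" by (rule ext) simp
  finally have mg: "map_par g \<theta> = trf \<rho> (\<lambda>a. Inr (g a)) ch" .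
  have "sat M e0 (map_par g \<theta>) \<longleftrightarrow> sat M (\<lambda>v. e0 (\<rho> v)) (map_par (kval (\<lambda>a. Inr (g a)) e0) ch)"
    unfolding mg by (rule sat_trf[OF \<rho>]) (simp add: KwI2)
  also have "map_par (kval (\<lambda>a. Inr (g a)) e0) ch = map_par g ch"
    by (rule map_par_cong) (auto simp: kval_def)
  also have "map_par g ch = Exs vs (Cj (map (map_par g) xs) (Eq (Var (Inr 0)) (Var (Inr 0))))"
    unfolding ch_def c_def by simp
  also have "sat M (\<lambda>v. e0 (\<rho> v)) \<dots> \<longleftrightarrow> (\<exists>e. assignment M e \<and> (\<forall>\<phi>\<in>set (map (map_par g) xs). sat M e \<phi>))"
    by (rule sat_closure) (use e0 vs c_def in \<open>auto simp: assignment_def\<close>)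
  finally have r: "sat M e0 (map_par g \<theta>) \<longleftrightarrow> (\<exists>e. assignment M e \<and> (\<forall>\<phi>\<in>\<Phi>. sat M e (map_par g \<phi>)))"
    using xs by simp
  show ?thesis using l r elemPD[OF g th] by simp
qed

lemma finsat_transfer:
  fixes S :: "('f, 'r, 'x + nat, 'n) fm set"
  assumes g: "elemP A g" and S: "\<forall>\<phi>\<in>S. wf_fm L \<phi> \<and> params \<phi> \<subseteq> A"
  shows "finsat M' S \<longleftrightarrow> finsat M (map_par g ` S)"
proof
  assume fs: "finsat M' S"
  show "finsat M (map_par g ` S)" unfolding finsat_def
  proof (intro allI impI)
    fix F assume F: "F \<subseteq> map_par g ` S" "finite F"
    then obtain F0 where F0: "F0 \<subseteq> S" "finite F0" "F = map_par g ` F0" using finite_subset_image by metis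
    have "\<exists>e. assignment M' e \<and> (\<forall>\<phi>\<in>F0. sat M' e \<phi>)" using finsatD[OF fs F0(1,2)] .
    moreover have "\<forall>\<phi>\<in>F0. wf_fm L \<phi> \<and> params \<phi> \<subseteq> A" using S F0(1) by blast
    ultimately have "\<exists>e. assignment M e \<and> (\<forall>\<phi>\<in>F0. sat M e (map_par g \<phi>))"
      using transfer_sat[OF g F0(2)] by simp
    thus "\<exists>e. assignment M e \<and> (\<forall>\<phi>\<in>F. sat M e \<phi>)" using F0(3) by auto
  qed
next
  assume fs: "finsat M (map_par g ` S)"
  show "finsat M' S" unfolding finsat_def
  proof (intro allI impI)
    fix F assume F: "F \<subseteq> S" "finite F"
    have "map_par g ` F \<subseteq> map_par g ` S" "finite (map_par g ` F)" using F by auto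
    hence "\<exists>e. assignment M e \<and> (\<forall>\<phi>\<in>map_par g ` F. sat M e \<phi>)" by (rule finsatD[OF fs])
    hence "\<exists>e. assignment M e \<and> (\<forall>\<phi>\<in>F. sat M e (map_par g \<phi>))" by auto
    moreover have "\<forall>\<phi>\<in>F. wf_fm L \<phi> \<and> params \<phi> \<subseteq> A" using S F(1) by blast
    ultimately show "\<exists>e. assignment M' e \<and> (\<forall>\<phi>\<in>F. sat M' e \<phi>)"
      using transfer_sat[OF g F(2)] by simp
  qed
qed

lemma pi_params: "ch \<in> \<pi> \<Longrightarrow> params ch = {}"
  using pt unfolding partial_type_def L_formula_def by blast
lemma pi_wf: "ch \<in> \<pi> \<Longrightarrow> wf_fm L ch"
  using pt unfolding partial_type_def L_formula_def by blast

lemma box_reflect: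
  assumes g: "elemP A g" and \<phi>: "\<phi> \<in> LM_formulas L M'" "params \<phi> \<subseteq> A"
    and \<psi>: "\<psi> \<in> LM_formulas L M'" "params \<psi> \<subseteq> A"
  shows "tbox L \<pi> M' \<phi> \<subseteq> tbox L \<pi> M' \<psi> \<longleftrightarrow> tbox L \<pi> M (map_par g \<phi>) \<subseteq> tbox L \<pi> M (map_par g \<psi>)"
proof -
  have gA: "g ` A \<subseteq> univ M" using g unfolding elemP_def by blast
  have \<phi>M: "map_par g \<phi> \<in> LM_formulas L M" by (rule LM_map_par[OF \<phi>(1)]) (use \<phi>(2) gA in blast)
  have \<psi>M: "map_par g \<psi> \<in> LM_formulas L M" by (rule LM_map_par[OF \<psi>(1)]) (use \<psi>(2) gA in blast)
  let ?S = "lift ` \<pi> \<union> {\<phi>, Neg \<psi>}"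
  have S: "\<forall>ch\<in>?S. wf_fm L ch \<and> params ch \<subseteq> A"
    using \<phi> \<psi> pi_params pi_wf unfolding LM_formulas_def lift_def by auto
  have img: "map_par g ` ?S = lift ` \<pi> \<union> {map_par g \<phi>, Neg (map_par g \<psi>)}"
  proof -
    have "map_par g ` lift ` \<pi> = lift ` \<pi>"
      unfolding image_image by (rule image_cong[OF refl]) (rule map_par_lift[OF pi_params])
    thus ?thesis by auto
  qed
  have "tbox L \<pi> M' \<phi> \<subseteq> tbox L \<pi> M' \<psi> \<longleftrightarrow> \<not> finsat M' ?S" by (rule box_sub_iff[OF pt \<phi>(1) \<psi>(1)])
  also have "\<dots> \<longleftrightarrow> \<not> finsat M (map_par g ` ?S)" using finsat_transfer[OF g S] by simp
  also have "\<dots> \<longleftrightarrow> tbox L \<pi> M (map_par g \<phi>) \<subseteq> tbox L \<pi> M (map_par g \<psi>)"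
    unfolding img by (rule box_sub_iff[OF pt \<phi>M \<psi>M, symmetric])
  finally show ?thesis .
qed

lemma elem_inj: assumes g: "elemP A g" shows "inj_on g A"
proof
  fix a b assume ab: "a \<in> A" "b \<in> A" "g a = g b"
  let ?\<phi> = "Eq (Par a) (Par b) :: ('f, 'r, nat, 'n) fm"
  have "sat M e0 (map_par g ?\<phi>)" using ab by simp
  hence "sat M' e0' ?\<phi>" using elemPD[OF g, of ?\<phi>] ab by simp
  thus "a = b" by simp
qed

lemma elem_pe:
  assumes g1: "elemP A g1" and g2: "elemP A g2"
  shows "partial_elementary L M (g1 ` A) (\<lambda>c. g2 (inv_into A g1 c))"
  unfolding partial_elementary_def
proof (intro conjI allI impI)
  have inj: "inj_on g1 A" by (rule elem_inj[OF g1])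
  show "g1 ` A \<subseteq> univ M" using g1 unfolding elemP_def by blast
  show "(\<lambda>c. g2 (inv_into A g1 c)) ` g1 ` A \<subseteq> univ M"
    using g2 inj unfolding elemP_def by (auto simp: inv_into_f_f)
  fix \<psi> :: "('f, 'r, nat, unit) fm" and e :: "nat \<Rightarrow> 'm"
  assume a: "L_formula L \<psi> \<and> (\<forall>v. e v \<in> g1 ` A)"
  define e' where "e' = (\<lambda>v. inv_into A g1 (e v))"
  have e'A: "e' v \<in> A" for v unfolding e'_def using a by (auto intro: inv_into_into)
  have ge': "g1 (e' v) = e v" for v unfolding e'_def using a by (auto intro: f_inv_into_f)
  define ch where "ch = psf (\<lambda>v. Some (e' v)) (lift \<psi> :: ('f, 'r, nat, 'n) fm)"
  have pl: "params (lift \<psi> :: ('f, 'r, nat, 'n) fm) = {}" "params (lift \<psi> :: ('f, 'r, nat, 'm) fm) = {}"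
    using a unfolding L_formula_def lift_def by auto
  have pl0: "params \<psi> = {}" using a unfolding L_formula_def by auto
  have chp: "wf_fm L ch" "params ch \<subseteq> A" "fv ch = {}"
  proof -
    show "wf_fm L ch" using a unfolding ch_def lift_def L_formula_def by auto
    show "params ch \<subseteq> A" using params_psf[of "\<lambda>v. Some (e' v)" "lift \<psi>"] pl e'A unfolding ch_def by auto
    show "fv ch = {}" using fv_psf[of "\<lambda>v. Some (e' v)" "lift \<psi>"] unfolding ch_def by auto
  qed
  have sM': "sat M' e0' ch \<longleftrightarrow> sat M' e' (lift \<psi>)" unfolding ch_def sat_psf by simp
  have mp: "map_par g ch = psf (\<lambda>v. Some (g (e' v))) (lift \<psi>)" for g :: "'n \<Rightarrow> 'm"
    unfolding ch_def psf_map_par map_par_lift[OF pl0] by simp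
  have s1: "sat M e0 (map_par g1 ch) \<longleftrightarrow> sat M e (lift \<psi>)" unfolding mp sat_psf using ge' by simp
  have s2: "sat M e0 (map_par g2 ch) \<longleftrightarrow> sat M ((\<lambda>c. g2 (inv_into A g1 c)) \<circ> e) (lift \<psi>)"
    unfolding mp sat_psf e'_def by (simp add: comp_def)
  show "sat M e (lift \<psi>) \<longleftrightarrow> sat M ((\<lambda>c. g2 (inv_into A g1 c)) \<circ> e) (lift \<psi>)"
    using elemPD[OF g1 chp] elemPD[OF g2 chp] s1 s2 by simp
qed
end


locale stone =
  fixes X :: "'a set" and Cl :: "'a set set" and nu :: "'a set \<Rightarrow> real" and tau :: "'a topology"
  assumes X_Cl: "X \<in> Cl" and Cl_sub: "C \<in> Cl \<Longrightarrow> C \<subseteq> X"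
    and Cl_compl: "C \<in> Cl \<Longrightarrow> X - C \<in> Cl"
    and Cl_int: "C \<in> Cl \<Longrightarrow> D \<in> Cl \<Longrightarrow> C \<inter> D \<in> Cl"
    and Cl_compact: "C \<in> Cl \<Longrightarrow> \<D> \<subseteq> Cl \<Longrightarrow> C \<subseteq> \<Union>\<D> \<Longrightarrow> \<exists>\<D>'\<subseteq>\<D>. finite \<D>' \<and> C \<subseteq> \<Union>\<D>'"
    and nu_nonneg: "C \<in> Cl \<Longrightarrow> 0 \<le> nu C" and nu_X: "nu X = 1"
    and nu_add: "C \<in> Cl \<Longrightarrow> D \<in> Cl \<Longrightarrow> C \<inter> D = {} \<Longrightarrow> nu (C \<union> D) = nu C + nu D"
    and open_iff: "openin tau U \<longleftrightarrow> U \<subseteq> X \<and> (\<forall>x\<in>U. \<exists>C\<in>Cl. x \<in> C \<and> C \<subseteq> U)"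
begin

lemma Cl_empty: "{} \<in> Cl"
  using Cl_compl[OF X_Cl] by simp

lemma Cl_un: assumes "C \<in> Cl" "D \<in> Cl" shows "C \<union> D \<in> Cl"
proof -
  have "C \<union> D = X - ((X - C) \<inter> (X - D))" using Cl_sub assms by blast
  thus ?thesis using assms by (simp add: Cl_compl Cl_int)
qed

lemma Cl_diff: assumes "C \<in> Cl" "D \<in> Cl" shows "C - D \<in> Cl"
proof -
  have "C - D = C \<inter> (X - D)" using Cl_sub assms by blast
  thus ?thesis using assms by (simp add: Cl_compl Cl_int)
qed

lemma nu_empty: "nu {} = 0"
  using nu_add[OF Cl_empty Cl_empty] by simp

lemma nu_mono: assumes "C \<in> Cl" "D \<in> Cl" "C \<subseteq> D" shows "nu C \<le> nu D"
proof -
  have "D = C \<union> (D - C)" using assms by blast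
  hence "nu D = nu C + nu (D - C)" using nu_add[OF assms(1) Cl_diff[OF assms(2,1)]] by auto
  thus ?thesis using nu_nonneg[OF Cl_diff[OF assms(2,1)]] by simp
qed

lemma nu_le1: "C \<in> Cl \<Longrightarrow> nu C \<le> 1"
  using nu_mono[OF _ X_Cl] Cl_sub nu_X by auto

lemma nu_subadd: assumes "C \<in> Cl" "D \<in> Cl" shows "nu (C \<union> D) \<le> nu C + nu D"
proof -
  have "C \<union> D = C \<union> (D - C)" by blast
  hence "nu (C \<union> D) = nu C + nu (D - C)" using nu_add[OF assms(1) Cl_diff[OF assms(2,1)]] by auto
  thus ?thesis using nu_mono[OF Cl_diff[OF assms(2,1)] assms(2)] by auto
qed

lemma Cl_open: "C \<in> Cl \<Longrightarrow> openin tau C"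
  unfolding open_iff using Cl_sub by blast

lemma open_X: "openin tau X"
  using Cl_open X_Cl by blast

lemma open_sub: "openin tau U \<Longrightarrow> U \<subseteq> X"
  using open_iff by blast

lemma topspace_tau: "topspace tau = X"
  unfolding topspace_def using open_X open_sub by blast

definition lam :: "'a set \<Rightarrow> ennreal" where
  "lam U = (SUP C\<in>{C\<in>Cl. C \<subseteq> U}. ennreal (nu C))"

definition om :: "'a set \<Rightarrow> ennreal" where
  "om A = (INF U\<in>{U. openin tau U \<and> A \<subseteq> U}. lam U)"

lemma lam_mono: "U \<subseteq> V \<Longrightarrow> lam U \<le> lam V"
  unfolding lam_def by (rule SUP_subset_mono) auto

lemma lam_ge: "C \<in> Cl \<Longrightarrow> C \<subseteq> U \<Longrightarrow> ennreal (nu C) \<le> lam U"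
  unfolding lam_def by (rule SUP_upper) auto

lemma lam_Cl: assumes "C \<in> Cl" shows "lam C = ennreal (nu C)"
proof (rule antisym)
  show "lam C \<le> ennreal (nu C)" unfolding lam_def
    by (rule SUP_least) (auto intro: ennreal_leI nu_mono assms)
qed (rule lam_ge[OF assms], simp)

lemma lam_le1: "lam U \<le> 1"
  unfolding lam_def by (rule SUP_least) (auto simp: nu_le1)

lemma lam_Un: assumes U: "openin tau U" and V: "openin tau V"
  shows "lam (U \<union> V) \<le> lam U + lam V"
  unfolding lam_def[of "U \<union> V"]
proof (rule SUP_least)
  fix C assume C: "C \<in> {C\<in>Cl. C \<subseteq> U \<union> V}"
  let ?D = "{D\<in>Cl. D \<subseteq> U \<or> D \<subseteq> V}"
  have "C \<subseteq> \<Union>?D"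
  proof
    fix x assume "x \<in> C"
    hence "x \<in> U \<or> x \<in> V" using C by blast
    thus "x \<in> \<Union>?D" using U V unfolding open_iff by blast
  qed
  then obtain D' where D': "D' \<subseteq> ?D" "finite D'" "C \<subseteq> \<Union>D'"
    using Cl_compact[of C ?D] C by blast
  define DU where "DU = \<Union>{D\<in>D'. D \<subseteq> U}"
  define DV where "DV = \<Union>{D\<in>D'. D \<subseteq> V}"
  have fin: "\<And>P. finite {D\<in>D'. P D}" using D'(2) by auto
  have UnCl: "\<And>F. finite F \<Longrightarrow> F \<subseteq> Cl \<Longrightarrow> \<Union>F \<in> Cl"
  proof -
    fix F :: "'a set set" assume "finite F" "F \<subseteq> Cl"
    thus "\<Union>F \<in> Cl" by (induction F rule: finite_induct) (auto intro: Cl_un Cl_empty)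
  qed
  have "{D\<in>D'. D \<subseteq> U} \<subseteq> Cl" "{D\<in>D'. D \<subseteq> V} \<subseteq> Cl" using D'(1) by blast+
  hence DU: "DU \<in> Cl" "DU \<subseteq> U" and DV: "DV \<in> Cl" "DV \<subseteq> V"
    unfolding DU_def DV_def using UnCl[OF fin] by auto
  have C1: "C \<inter> DU \<in> Cl" "C - DU \<in> Cl" using C DU by (auto intro: Cl_int Cl_diff)
  have "C - DU \<subseteq> DV" using D' unfolding DU_def DV_def by blast
  have "nu C = nu (C \<inter> DU) + nu (C - DU)"
    using nu_add[OF C1] by (metis Int_Diff_Un Int_Diff_disjoint)
  hence "ennreal (nu C) = ennreal (nu (C \<inter> DU)) + ennreal (nu (C - DU))"
    using C1 nu_nonneg by (simp add: ennreal_plus)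
  also have "\<dots> \<le> lam U + lam V"
    apply (rule add_mono)
    using C1 DU DV \<open>C - DU \<subseteq> DV\<close> by (auto intro!: lam_ge)
  finally show "ennreal (nu C) \<le> lam U + lam V" .
qed

lemma open_Un: "openin tau U \<Longrightarrow> openin tau V \<Longrightarrow> openin tau (U \<union> V)" by blast

lemma lam_finite_sub: fixes U :: "nat \<Rightarrow> 'a set" assumes "\<And>n. openin tau (U n)"
  shows "lam (\<Union>n<N. U n) \<le> (\<Sum>n<N. lam (U n))"
proof (induction N)
  case 0 show ?case using lam_Cl[OF Cl_empty] nu_empty by simp
next
  case (Suc N)
  have o: "openin tau (\<Union>n<N. U n)" using assms by blast
  have "(\<Union>n<Suc N. U n) = (\<Union>n<N. U n) \<union> U N" by (auto simp: lessThan_Suc)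
  hence "lam (\<Union>n<Suc N. U n) \<le> lam (\<Union>n<N. U n) + lam (U N)"
    using lam_Un[OF o assms] by simp
  also have "\<dots> \<le> (\<Sum>n<N. lam (U n)) + lam (U N)" using Suc by (simp add: add_right_mono)
  finally show ?case by simp
qed

lemma compact_open: fixes U :: "nat \<Rightarrow> 'a set" assumes C: "C \<in> Cl" and U: "\<And>n. openin tau (U n)" and sub: "C \<subseteq> (\<Union>n. U n)"
  shows "\<exists>N. C \<subseteq> (\<Union>n<N. U n)"
proof -
  let ?D = "{D\<in>Cl. \<exists>n. D \<subseteq> U n}"
  have "C \<subseteq> \<Union>?D"
  proof
    fix x assume "x \<in> C"
    then obtain n where "x \<in> U n" using sub by blast
    thus "x \<in> \<Union>?D" using U[of n] unfolding open_iff by blast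
  qed
  then obtain D' where D': "D' \<subseteq> ?D" "finite D'" "C \<subseteq> \<Union>D'"
    using Cl_compact[of C ?D] C by blast
  have "\<forall>D\<in>D'. \<exists>n. D \<subseteq> U n" using D' by blast
  then obtain f where f: "\<And>D. D \<in> D' \<Longrightarrow> D \<subseteq> U (f D)" by metis
  define N where "N = Suc (Max (f ` D'))"
  have lt: "f D < N" if "D \<in> D'" for D
  proof -
    have "f D \<le> Max (f ` D')" using D'(2) that by simp
    thus ?thesis unfolding N_def by simp
  qed
  have "C \<subseteq> (\<Union>n<N. U n)"
  proof
    fix x assume "x \<in> C"
    then obtain D where D: "D \<in> D'" "x \<in> D" using D'(3) by blast
    hence "x \<in> U (f D)" using f by blast
    thus "x \<in> (\<Union>n<N. U n)" using lt[OF D(1)] by blast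
  qed
  thus ?thesis by blast
qed

lemma lam_countable_sub: fixes U :: "nat \<Rightarrow> 'a set" assumes U: "\<And>n. openin tau (U n)"
  shows "lam (\<Union>n. U n) \<le> (\<Sum>n. lam (U n))"
  unfolding lam_def[of "\<Union>n. U n"]
proof (rule SUP_least)
  fix C assume C: "C \<in> {C\<in>Cl. C \<subseteq> (\<Union>n. U n)}"
  hence C1: "C \<in> Cl" and C2: "C \<subseteq> (\<Union>n. U n)" by auto
  obtain N where N: "C \<subseteq> (\<Union>n<N. U n)" using compact_open[OF C1 U C2] by blast
  have "ennreal (nu C) \<le> lam (\<Union>n<N. U n)" by (rule lam_ge[OF C1 N])
  also have "\<dots> \<le> (\<Sum>n<N. lam (U n))" by (rule lam_finite_sub[OF U])
  also have "\<dots> \<le> (\<Sum>n. lam (U n))" by (rule sum_le_suminf) (rule summableI, simp, simp)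
  finally show "ennreal (nu C) \<le> (\<Sum>n. lam (U n))" .
qed

lemma om_le_lam: "openin tau U \<Longrightarrow> A \<subseteq> U \<Longrightarrow> om A \<le> lam U"
  unfolding om_def by (rule INF_lower) auto

lemma om_open: assumes "openin tau U" shows "om U = lam U"
proof (rule antisym)
  show "om U \<le> lam U" using om_le_lam[OF assms] by simp
  show "lam U \<le> om U" unfolding om_def by (rule INF_greatest) (auto intro: lam_mono)
qed

lemma om_mono: "A \<subseteq> B \<Longrightarrow> om A \<le> om B"
  unfolding om_def by (rule INF_superset_mono) auto

lemma om_Cl: assumes "C \<in> Cl" shows "om C = ennreal (nu C)"
  using om_open[OF Cl_open[OF assms]] lam_Cl[OF assms] by simp

lemma om_le1: "A \<subseteq> X \<Longrightarrow> om A \<le> 1"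
  using om_mono[of A X] om_Cl[OF X_Cl] nu_X by auto

lemma om_countable_sub: fixes A :: "nat \<Rightarrow> 'a set" assumes A: "\<And>n. A n \<subseteq> X"
  shows "om (\<Union>n. A n) \<le> (\<Sum>n. om (A n))"
proof (rule ennreal_le_epsilon)
  fix e :: real assume e: "0 < e" "(\<Sum>n. om (A n)) < top"
  have "\<forall>n. \<exists>U. openin tau U \<and> A n \<subseteq> U \<and> lam U < om (A n) + ennreal (e * (1/2)^Suc n)"
  proof
    fix n
    have fin: "om (A n) < top" using om_le1[OF A[of n]] by (simp add: order_le_less_trans)
    have pos: "0 < ennreal (e * (1/2)^Suc n)" using e by simp
    have "om (A n) + 0 < om (A n) + ennreal (e * (1/2)^Suc n)"
      by (subst ennreal_add_left_cancel_less) (use fin pos in auto)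
    hence "om (A n) < om (A n) + ennreal (e * (1/2)^Suc n)" by simp
    thus "\<exists>U. openin tau U \<and> A n \<subseteq> U \<and> lam U < om (A n) + ennreal (e * (1/2)^Suc n)"
      unfolding om_def[of "A n"] INF_less_iff by auto
  qed
  then obtain U where U: "\<And>n. openin tau (U n)" "\<And>n. A n \<subseteq> U n"
    "\<And>n. lam (U n) < om (A n) + ennreal (e * (1/2)^Suc n)" by metis
  have "om (\<Union>n. A n) \<le> lam (\<Union>n. U n)"
    apply (rule om_le_lam) using U by auto
  also have "\<dots> \<le> (\<Sum>n. lam (U n))" by (rule lam_countable_sub[OF U(1)])
  also have "\<dots> \<le> (\<Sum>n. om (A n) + ennreal (e * (1/2)^Suc n))"
    by (intro suminf_le summableI allI less_imp_le[OF U(3)])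
  also have "\<dots> = (\<Sum>n. om (A n)) + (\<Sum>n. ennreal e * ennreal ((1/2) ^ Suc n))"
    using \<open>0 < e\<close> by (subst suminf_add[symmetric])
                       (auto simp del: ennreal_suminf_cmult simp add: ennreal_mult[symmetric])
  also have "\<dots> = (\<Sum>n. om (A n)) + e"
    unfolding ennreal_suminf_cmult
    by (subst suminf_ennreal_eq[OF zero_le_power power_half_series]) auto
  finally show "om (\<Union>n. A n) \<le> (\<Sum>n. om (A n)) + ennreal e" .
qed


lemma om_empty: "om {} = 0"
  using om_Cl[OF Cl_empty] nu_empty by simp

lemma om_sub2: assumes "a \<subseteq> X" "b \<subseteq> X" shows "om (a \<union> b) \<le> om a + om b"
proof -
  define A where "A = (\<lambda>n::nat. if n = 0 then a else if n = 1 then b else {})"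
  have U: "(\<Union>n. A n) = a \<union> b"
  proof
    show "(\<Union>n. A n) \<subseteq> a \<union> b" unfolding A_def by auto
    show "a \<union> b \<subseteq> (\<Union>n. A n)"
    proof -
      have "A 0 = a" "A 1 = b" unfolding A_def by auto
      thus ?thesis by blast
    qed
  qed
  have "om (\<Union>n. A n) \<le> (\<Sum>n. om (A n))"
    by (rule om_countable_sub) (use assms in \<open>auto simp: A_def\<close>)
  also have "(\<Sum>n. om (A n)) = (\<Sum>n\<in>{0,1}. om (A n))"
    by (rule suminf_finite) (auto simp: A_def om_empty)
  also have "\<dots> = om a + om b" by (simp add: A_def)
  finally show ?thesis using U by simp
qed

lemma key_split: assumes U: "openin tau U" and V: "openin tau V"
  shows "lam (V \<inter> U) + om (V - U) \<le> lam V"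
proof -
  let ?S = "{C\<in>Cl. C \<subseteq> V \<inter> U}"
  have ne: "?S \<noteq> {}" using Cl_empty by blast
  have "lam (V \<inter> U) + om (V - U) = (SUP C\<in>?S. ennreal (nu C) + om (V - U))"
    unfolding lam_def by (rule ennreal_SUP_add_left[OF ne, symmetric])
  also have "\<dots> \<le> lam V"
  proof (rule SUP_least)
    fix C assume C: "C \<in> ?S"
    hence C1: "C \<in> Cl" and C2: "C \<subseteq> V \<inter> U" by auto
    have VX: "V \<subseteq> X" using open_sub[OF V] .
    have VC: "V - C = V \<inter> (X - C)" using VX by blast
    have oVC: "openin tau (V - C)" unfolding VC
      by (rule openin_Int[OF V Cl_open[OF Cl_compl[OF C1]]])
    have "om (V - U) \<le> lam (V - C)" by (rule om_le_lam[OF oVC]) (use C2 in blast)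
    hence "ennreal (nu C) + om (V - U) \<le> ennreal (nu C) + lam (V - C)" by (rule add_left_mono)
    also have "\<dots> = (SUP D\<in>{D\<in>Cl. D \<subseteq> V - C}. ennreal (nu C) + ennreal (nu D))"
      unfolding lam_def by (rule ennreal_SUP_add_right) (use Cl_empty in blast)
    also have "\<dots> \<le> lam V"
    proof (rule SUP_least)
      fix D assume D: "D \<in> {D\<in>Cl. D \<subseteq> V - C}"
      hence D1: "D \<in> Cl" and D2: "D \<subseteq> V - C" by auto
      have "ennreal (nu C) + ennreal (nu D) = ennreal (nu (C \<union> D))"
      proof -
        have "C \<inter> D = {}" using D2 by blast
        hence "nu (C \<union> D) = nu C + nu D" using nu_add[OF C1 D1] by simp
        thus ?thesis using nu_nonneg[OF C1] nu_nonneg[OF D1] by (simp add: ennreal_plus)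
      qed
      also have "\<dots> \<le> lam V" by (rule lam_ge) (use C1 D1 C2 D2 Cl_un in auto)
      finally show "ennreal (nu C) + ennreal (nu D) \<le> lam V" .
    qed
    finally show "ennreal (nu C) + om (V - U) \<le> lam V" .
  qed
  finally show ?thesis .
qed

lemma open_lambda: assumes U: "openin tau U"
  shows "U \<in> lambda_system X (Pow X) om"
  unfolding lambda_system_def
proof (safe)
  show "x \<in> X" if "x \<in> U" for x using open_sub[OF U] that by blast
  fix x assume x: "x \<subseteq> X"
  show "om (U \<inter> x) + om ((X - U) \<inter> x) = om x"
  proof (rule antisym)
    show "om (U \<inter> x) + om ((X - U) \<inter> x) \<le> om x"
      unfolding om_def[of x]
    proof (rule INF_greatest)
      fix V assume V: "V \<in> {U. openin tau U \<and> x \<subseteq> U}"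
      hence V1: "openin tau V" and V2: "x \<subseteq> V" by auto
      have "om (U \<inter> x) \<le> lam (V \<inter> U)" by (rule om_le_lam) (use V1 U V2 in auto)
      moreover have "om ((X - U) \<inter> x) \<le> om (V - U)" by (rule om_mono) (use V2 in auto)
      ultimately have "om (U \<inter> x) + om ((X - U) \<inter> x) \<le> lam (V \<inter> U) + om (V - U)"
        by (rule add_mono)
      also have "\<dots> \<le> lam V" by (rule key_split[OF U V1])
      finally show "om (U \<inter> x) + om ((X - U) \<inter> x) \<le> lam V" .
    qed
    have "(U \<inter> x) \<union> ((X - U) \<inter> x) = x" using x by blast
    hence "om x = om ((U \<inter> x) \<union> ((X - U) \<inter> x))" by simp
    also have "\<dots> \<le> om (U \<inter> x) + om ((X - U) \<inter> x)" by (rule om_sub2) (use x in auto)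
    finally show "om x \<le> om (U \<inter> x) + om ((X - U) \<inter> x)" .
  qed
qed

definition Bor :: "'a set set" where "Bor = sigma_sets X {U. openin tau U}"

lemma opens_Pow: "{U. openin tau U} \<subseteq> Pow X" using open_sub by blast

lemma ms_Bor: "measure_space X Bor om"
proof -
  interpret P: sigma_algebra X "Pow X" by (rule sigma_algebra_Pow)
  have oms: "outer_measure_space (Pow X) om"
  proof -
    have "countably_subadditive (Pow X) om"
      unfolding countably_subadditive_def
    proof (intro allI impI)
      fix A :: "nat \<Rightarrow> 'a set" assume "range A \<subseteq> Pow X"
      thus "om (\<Union>i. A i) \<le> (\<Sum>i. om (A i))" by (intro om_countable_sub) auto
    qed
    thus ?thesis unfolding outer_measure_space_def positive_def increasing_def
      using om_empty om_mono by auto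
  qed
  have ms: "measure_space X (lambda_system X (Pow X) om) om"
    by (rule P.caratheodory_lemma[OF oms])
  hence sa: "sigma_algebra X (lambda_system X (Pow X) om)" by (simp add: measure_space_def)
  have "Bor \<subseteq> lambda_system X (Pow X) om"
    unfolding Bor_def by (rule sigma_algebra.sigma_sets_subset[OF sa]) (use open_lambda in blast)
  moreover have "sigma_algebra X Bor" unfolding Bor_def by (rule sigma_algebra_sigma_sets[OF opens_Pow])
  ultimately show ?thesis using measure_down[OF ms] by blast
qed

definition mu :: "'a measure" where "mu = measure_of X {U. openin tau U} om"

lemma sets_mu: "sets mu = Bor" unfolding mu_def Bor_def by (rule sets_measure_of[OF opens_Pow])
lemma space_mu: "space mu = X" unfolding mu_def by (rule space_measure_of[OF opens_Pow])

lemma emeasure_mu: assumes "B \<in> Bor" shows "emeasure mu B = om B"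
  by (rule emeasure_measure_of[OF mu_def opens_Pow])
     (use ms_Bor assms sets_mu in \<open>auto simp: measure_space_def\<close>)

lemma open_Bor: "openin tau U \<Longrightarrow> U \<in> Bor"
  unfolding Bor_def by auto

lemma prob_mu: "prob_space mu"
proof (rule prob_spaceI)
  have "X \<in> Bor" using open_Bor[OF open_X] .
  thus "emeasure mu (space mu) = 1" using emeasure_mu om_Cl[OF X_Cl] nu_X space_mu by simp
qed

lemma outer_reg: assumes B: "B \<in> Bor"
  shows "measure mu B = (INF U\<in>{U. openin tau U \<and> B \<subseteq> U}. measure mu U)"
proof -
  interpret prob_space mu by (rule prob_mu)
  have BX: "B \<subseteq> X" using B sets.sets_into_space sets_mu space_mu by blast
  have ne: "{U. openin tau U \<and> B \<subseteq> U} \<noteq> {}" using open_X BX by blast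
  have bdd: "bdd_below ((\<lambda>U. measure mu U) ` {U. openin tau U \<and> B \<subseteq> U})"
    by (rule bdd_belowI[of _ 0]) auto
  show ?thesis
  proof (rule antisym)
    show "measure mu B \<le> (INF U\<in>{U. openin tau U \<and> B \<subseteq> U}. measure mu U)"
      by (rule cINF_greatest[OF ne]) (use B sets_mu open_Bor in \<open>auto intro!: finite_measure_mono\<close>)
    show "(INF U\<in>{U. openin tau U \<and> B \<subseteq> U}. measure mu U) \<le> measure mu B"
    proof (rule field_le_epsilon)
      fix e :: real assume e: "0 < e"
      have eB: "emeasure mu B = ennreal (measure mu B)" using B sets_mu emeasure_eq_measure by auto
      have "om B < om B + ennreal e"
      proof -
        have "om B + 0 < om B + ennreal e"
          by (subst ennreal_add_left_cancel_less) (use e emeasure_mu[OF B] eB in auto)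
        thus ?thesis by simp
      qed
      then obtain U where U: "openin tau U" "B \<subseteq> U" "lam U < om B + ennreal e"
        unfolding om_def[of B] INF_less_iff by auto
      have "ennreal (measure mu U) = emeasure mu U" using open_Bor[OF U(1)] sets_mu emeasure_eq_measure by auto
      also have "\<dots> = lam U" using emeasure_mu[OF open_Bor[OF U(1)]] om_open[OF U(1)] by simp
      also have "\<dots> < ennreal (measure mu B) + ennreal e" using U(3) emeasure_mu[OF B] eB by simp
      also have "\<dots> = ennreal (measure mu B + e)" using e by (simp add: ennreal_plus)
      finally have "measure mu U < measure mu B + e"
        by (subst (asm) ennreal_less_iff) (use e in auto)
      hence "(INF U\<in>{U. openin tau U \<and> B \<subseteq> U}. measure mu U) \<le> measure mu U"
        using U(1,2) by (intro cINF_lower[OF bdd]) auto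
      thus "(INF U\<in>{U. openin tau U \<and> B \<subseteq> U}. measure mu U) \<le> measure mu B + e"
        using \<open>measure mu U < measure mu B + e\<close> by linarith
    qed
  qed
qed

lemma closed_iff: "closedin tau C \<longleftrightarrow> C \<subseteq> X \<and> openin tau (X - C)"
  unfolding closedin_def topspace_tau by simp

lemma inner_reg: assumes B: "B \<in> Bor"
  shows "measure mu B = (SUP C\<in>{C. closedin tau C \<and> C \<subseteq> B}. measure mu C)"
proof -
  interpret prob_space mu by (rule prob_mu)
  have BX: "B \<subseteq> X" using B sets.sets_into_space sets_mu space_mu by blast
  have "closedin tau {}" by simp
  hence ne: "{C. closedin tau C \<and> C \<subseteq> B} \<noteq> {}" by blast
  have bdd: "bdd_above ((\<lambda>C. measure mu C) ` {C. closedin tau C \<and> C \<subseteq> B})"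
    by (rule bdd_aboveI[of _ 1]) auto
  have closedBor: "C \<in> Bor" if "closedin tau C" for C
  proof -
    have "X - C \<in> Bor" using open_Bor closed_iff that by blast
    hence "X - (X - C) \<in> Bor" unfolding Bor_def by (rule sigma_sets.Compl)
    moreover have "X - (X - C) = C" using that closed_iff by blast
    ultimately show ?thesis by simp
  qed
  show ?thesis
  proof (rule antisym)
    show "(SUP C\<in>{C. closedin tau C \<and> C \<subseteq> B}. measure mu C) \<le> measure mu B"
      by (rule cSUP_least[OF ne]) (use B sets_mu closedBor in \<open>auto intro!: finite_measure_mono\<close>)
    show "measure mu B \<le> (SUP C\<in>{C. closedin tau C \<and> C \<subseteq> B}. measure mu C)"
    proof (rule field_le_epsilon)
      fix e :: real assume e: "0 < e"
      have B': "X - B \<in> Bor" using B unfolding Bor_def by (rule sigma_sets.Compl)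
      have "(INF U\<in>{U. openin tau U \<and> X - B \<subseteq> U}. measure mu U) < measure mu (X - B) + e"
        using outer_reg[OF B'] e by simp
      then obtain U where U: "openin tau U" "X - B \<subseteq> U" "measure mu U < measure mu (X - B) + e"
        by (subst (asm) cINF_less_iff) (use open_X in \<open>auto intro: bdd_belowI[of _ 0]\<close>)
      have UX: "U \<subseteq> X" using open_sub[OF U(1)] .
      have cl: "closedin tau (X - U)" unfolding closed_iff using U(1) UX by (simp add: Diff_Diff_Int Int_absorb1)
      have sub: "X - U \<subseteq> B" using U(2) BX by blast
      have mU: "measure mu (X - U) = 1 - measure mu U"
        using prob_compl[of U] open_Bor[OF U(1)] sets_mu space_mu by auto
      have mB: "measure mu (X - B) = 1 - measure mu B"
        using prob_compl[of B] B sets_mu space_mu by auto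
      have "measure mu (X - U) \<le> (SUP C\<in>{C. closedin tau C \<and> C \<subseteq> B}. measure mu C)"
        by (rule cSUP_upper[OF _ bdd]) (use cl sub in auto)
      thus "measure mu B \<le> (SUP C\<in>{C. closedin tau C \<and> C \<subseteq> B}. measure mu C) + e"
        using mU mB U(3) by linarith
    qed
  qed
qed

lemma regular: "regular_borel_prob tau mu"
  unfolding regular_borel_prob_def
proof (intro conjI ballI)
  show "prob_space mu" by (rule prob_mu)
  show "space mu = topspace tau" using space_mu topspace_tau by simp
  show "sets mu = sets (borel_of tau)" unfolding borel_of_def topspace_tau sets_mu Bor_def
    by (rule sets_measure_of[OF opens_Pow, symmetric])
  fix B assume "B \<in> sets mu"
  hence B: "B \<in> Bor" using sets_mu by simp
  show "measure mu B = (INF U\<in>{U. openin tau U \<and> B \<subseteq> U}. measure mu U)" by (rule outer_reg[OF B])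
  show "measure mu B = (SUP C\<in>{C. closedin tau C \<and> C \<subseteq> B}. measure mu C)" by (rule inner_reg[OF B])
qed

lemma img_inv: assumes "\<forall>x\<in>C. f (g x) = x" shows "f ` g ` C = C"
proof
  show "f ` g ` C \<subseteq> C" using assms by auto
  show "C \<subseteq> f ` g ` C"
  proof
    fix x assume x: "x \<in> C"
    hence "x = f (g x)" using assms by simp
    thus "x \<in> f ` g ` C" using x by blast
  qed
qed

lemma pre_inv: assumes "\<forall>x\<in>X. f x \<in> X \<and> g x \<in> X \<and> g (f x) = x \<and> f (g x) = x" "U \<subseteq> X"
  shows "g -` U \<inter> X = f ` U"
proof
  show "g -` U \<inter> X \<subseteq> f ` U"
  proof
    fix x assume x: "x \<in> g -` U \<inter> X"
    hence "x = f (g x)" "g x \<in> U" using assms(1) by auto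
    thus "x \<in> f ` U" by blast
  qed
  show "f ` U \<subseteq> g -` U \<inter> X"
  proof
    fix y assume "y \<in> f ` U"
    then obtain u where u: "u \<in> U" "y = f u" by blast
    hence "u \<in> X" using assms(2) by blast
    thus "y \<in> g -` U \<inter> X" using u assms(1) by auto
  qed
qed

definition INV :: "('a \<Rightarrow> 'a) \<Rightarrow> ('a \<Rightarrow> 'a) \<Rightarrow> bool" where
  "INV f g \<longleftrightarrow> (\<forall>x\<in>X. f x \<in> X \<and> g x \<in> X \<and> g (f x) = x \<and> f (g x) = x) \<and>
     (\<forall>C\<in>Cl. f ` C \<in> Cl \<and> g ` C \<in> Cl \<and> nu (f ` C) = nu C)"

lemma INV_sym: assumes "INV f g" shows "INV g f"
  unfolding INV_def
proof (intro conjI ballI)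
  fix C assume C: "C \<in> Cl"
  have gC: "g ` C \<in> Cl" using assms C unfolding INV_def by blast
  have "\<forall>x\<in>C. f (g x) = x" using assms Cl_sub[OF C] unfolding INV_def by blast
  hence "f ` g ` C = C" by (rule img_inv)
  thus "nu (g ` C) = nu C" using assms gC unfolding INV_def by metis
qed (use assms in \<open>auto simp: INV_def\<close>)

lemma INV_open: assumes "INV f g" "openin tau U" shows "openin tau (f ` U)"
  unfolding open_iff
proof (intro conjI ballI)
  show "f ` U \<subseteq> X" using assms open_sub unfolding INV_def by blast
  fix y assume "y \<in> f ` U"
  then obtain x where x: "x \<in> U" "y = f x" by blast
  then obtain C where C: "C \<in> Cl" "x \<in> C" "C \<subseteq> U" using assms(2) open_iff by blast
  thus "\<exists>C\<in>Cl. y \<in> C \<and> C \<subseteq> f ` U" using assms(1) x unfolding INV_def by blast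
qed

lemma INV_lam: assumes "INV f g" "openin tau U" shows "lam (f ` U) \<le> lam U"
  unfolding lam_def[of "f ` U"]
proof (rule SUP_least)
  fix C assume C: "C \<in> {C\<in>Cl. C \<subseteq> f ` U}"
  have UX: "U \<subseteq> X" using open_sub[OF assms(2)] .
  have gC: "g ` C \<in> Cl" using assms(1) C unfolding INV_def by blast
  have gCU: "g ` C \<subseteq> U"
  proof
    fix y assume "y \<in> g ` C"
    then obtain x where x: "x \<in> C" "y = g x" by blast
    then obtain u where u: "u \<in> U" "x = f u" using C by blast
    hence "g x = u" using UX assms(1) unfolding INV_def by blast
    thus "y \<in> U" using x u by simp
  qed
  have "\<forall>x\<in>C. f (g x) = x" using assms(1) Cl_sub C unfolding INV_def by blast
  hence "f ` g ` C = C" by (rule img_inv)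
  hence "nu C = nu (g ` C)" using assms(1) gC unfolding INV_def by metis
  thus "ennreal (nu C) \<le> lam U" using lam_ge[OF gC gCU] by simp
qed

lemma INV_om_le: assumes "INV f g" shows "om (f ` A) \<le> om A"
  unfolding om_def[of A]
proof (rule INF_greatest)
  fix U assume U: "U \<in> {U. openin tau U \<and> A \<subseteq> U}"
  have "om (f ` A) \<le> lam (f ` U)" by (rule om_le_lam) (use INV_open[OF assms] U in auto)
  also have "\<dots> \<le> lam U" using INV_lam[OF assms] U by auto
  finally show "om (f ` A) \<le> lam U" .
qed

lemma INV_om: assumes "INV f g" "A \<subseteq> X" shows "om (f ` A) = om A"
proof (rule antisym)
  show "om (f ` A) \<le> om A" by (rule INV_om_le[OF assms(1)])
  have "\<forall>x\<in>A. g (f x) = x" using assms unfolding INV_def by blast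
  hence "g ` f ` A = A" by (rule img_inv)
  hence "om A = om (g ` (f ` A))" by simp
  also have "\<dots> \<le> om (f ` A)" by (rule INV_om_le[OF INV_sym[OF assms(1)]])
  finally show "om A \<le> om (f ` A)" .
qed

lemma INV_sets: assumes "INV f g" "B \<in> Bor" shows "f ` B \<in> Bor"
proof -
  have meas0: "g \<in> measurable mu (measure_of X {U. openin tau U} om)"
  proof (rule measurable_measure_of[OF opens_Pow])
    show "g \<in> space mu \<rightarrow> X" using assms(1) space_mu unfolding INV_def by auto
    fix U assume U: "U \<in> {U. openin tau U}"
    have "g -` U \<inter> space mu = f ` U"
      using pre_inv[of f g U] assms(1) open_sub[of U] U space_mu unfolding INV_def by auto
    thus "g -` U \<inter> space mu \<in> sets mu" using INV_open[OF assms(1)] U open_Bor sets_mu by auto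
  qed
  hence meas: "g \<in> measurable mu mu" by (simp add: mu_def[symmetric])
  have BX: "B \<subseteq> X" using assms(2) sets.sets_into_space sets_mu space_mu by blast
  have "g -` B \<inter> space mu \<in> sets mu" using measurable_sets[OF meas] assms(2) sets_mu by auto
  moreover have "g -` B \<inter> space mu = f ` B"
    using pre_inv[of f g B] assms(1) BX space_mu unfolding INV_def by auto
  ultimately show ?thesis using sets_mu by simp
qed

theorem main: "\<exists>\<mu>. regular_borel_prob tau \<mu> \<and>
   (\<forall>f g. INV f g \<longrightarrow> (\<forall>B\<in>sets \<mu>. emeasure \<mu> (f ` B) = emeasure \<mu> B))"
proof (intro exI conjI allI impI ballI)
  show "regular_borel_prob tau mu" by (rule regular)
  fix f g B assume fg: "INV f g" and B: "B \<in> sets mu"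
  have B': "B \<in> Bor" using B sets_mu by simp
  have BX: "B \<subseteq> X" using B sets.sets_into_space space_mu by blast
  show "emeasure mu (f ` B) = emeasure mu B"
    using emeasure_mu[OF B'] emeasure_mu[OF INV_sets[OF fg B']] INV_om[OF fg BX] by simp
qed
end


lemma sets_borel_of: "sets (borel_of X) = sigma_sets (topspace X) {U. openin X U}"
  unfolding borel_of_def by (rule sets_measure_of) (auto dest: openin_subset)

definition TT :: "('f, 'r, 'x + nat, 'p) fm" where
  "TT = Eq (Var (Inl undefined)) (Var (Inl undefined))"

lemma TT_LM: "TT \<in> LM_formulas L N"
  unfolding TT_def LM_formulas_def by auto

lemma map_par_TT[simp]: "map_par g TT = TT"
  unfolding TT_def by simp

lemma box_TT:
  fixes N :: "('f, 'r, 'k) struct" and \<pi> :: "('f, 'r, 'x + nat, unit) fm set"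
  shows "tbox L \<pi> N TT = types_pi L \<pi> N"
proof -
  have "TT \<in> q" if q: "q \<in> types L N" for q :: "('f, 'r, 'x + nat, 'k) fm set"
  proof (rule ccontr)
    assume "TT \<notin> q"
    hence "Neg TT \<in> q" using types_Neg[OF q TT_LM] by blast
    hence "{Neg TT} \<subseteq> q" by simp
    then obtain e where "assignment N e" "\<forall>\<phi>\<in>{Neg (TT :: ('f, 'r, 'x + nat, 'k) fm)}. sat N e \<phi>"
      using finsatD[OF types_finsat[OF q]] by blast
    thus False unfolding TT_def by simp
  qed
  thus ?thesis unfolding tbox_def types_pi_def by blast
qed

lemma topspace_stone: "topspace (stone_top L \<pi> N) = types_pi L \<pi> N"
proof -
  have "openin (stone_top L \<pi> N) (types_pi L \<pi> N)"
    unfolding stone_open_iff using box_TT TT_LM by blast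
  moreover have "\<And>U. openin (stone_top L \<pi> N) U \<Longrightarrow> U \<subseteq> types_pi L \<pi> N"
    unfolding stone_open_iff by blast
  ultimately show ?thesis unfolding topspace_def by blast
qed

lemma box_open: "\<phi> \<in> LM_formulas L N \<Longrightarrow> openin (stone_top L \<pi> N) (tbox L \<pi> N \<phi>)"
  unfolding stone_open_iff using box_sub by blast

locale transfer2 = transfer L T \<pi> M M'
  for L :: "('f, 'r) lang" and T :: "('f, 'r, 'x + nat, unit) fm set"
    and \<pi> :: "('f, 'r, 'x + nat, unit) fm set"
    and M :: "('f, 'r, 'm) struct" and M' :: "('f, 'r, 'n) struct" +
  fixes \<mu> :: "('f, 'r, 'x + nat, 'm) fm set measure"
  assumes homM: "strongly_aleph0_homogeneous L M"
    and inv: "aut_invariant_measure L \<pi> M \<mu>"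
begin

lemma reg: "regular_borel_prob (stone_top L \<pi> M) \<mu>"
  using inv unfolding aut_invariant_measure_def by blast

lemma inv_mu: "\<sigma> \<in> Aut L M \<Longrightarrow> B \<in> sets \<mu> \<Longrightarrow> emeasure \<mu> (act_type \<sigma> ` B) = emeasure \<mu> B"
  using inv unfolding aut_invariant_measure_def by blast

lemma box_sets: assumes "\<psi> \<in> LM_formulas L M" shows "tbox L \<pi> M \<psi> \<in> sets \<mu>"
proof -
  have "sets \<mu> = sigma_sets (topspace (stone_top L \<pi> M)) {U. openin (stone_top L \<pi> M) U}"
    using reg sets_borel_of unfolding regular_borel_prob_def by metis
  thus ?thesis using box_open[OF assms] by auto
qed

definition gsel :: "('f, 'r, 'x + nat, 'n) fm \<Rightarrow> 'n \<Rightarrow> 'm" where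
  "gsel \<phi> = (SOME g. elemP (params \<phi>) g)"

definition nu0 :: "('f, 'r, 'x + nat, 'n) fm \<Rightarrow> real" where
  "nu0 \<phi> = measure \<mu> (tbox L \<pi> M (map_par (gsel \<phi>) \<phi>))"

lemma LM_params: "\<phi> \<in> LM_formulas L N \<Longrightarrow> params \<phi> \<subseteq> univ N"
  unfolding LM_formulas_def by blast

lemma gsel: assumes "\<phi> \<in> LM_formulas L M'" shows "elemP (params \<phi>) (gsel \<phi>)"
proof -
  have "\<exists>g. elemP (params \<phi>) g" by (rule elem_exists[OF finite_params LM_params[OF assms]])
  thus ?thesis unfolding gsel_def by (rule someI_ex)
qed

lemma elem_LM: "elemP A g \<Longrightarrow> \<phi> \<in> LM_formulas L M' \<Longrightarrow> params \<phi> \<subseteq> A \<Longrightarrow> map_par g \<phi> \<in> LM_formulas L M"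
  by (rule LM_map_par) (auto simp: elemP_def)

lemma N1:
  assumes g: "elemP A g" and \<phi>: "\<phi> \<in> LM_formulas L M'" "params \<phi> \<subseteq> A"
  shows "nu0 \<phi> = measure \<mu> (tbox L \<pi> M (map_par g \<phi>))"
proof -
  let ?B = "params \<phi>"
  let ?g1 = "gsel \<phi>"
  have g1: "elemP ?B ?g1" by (rule gsel[OF \<phi>(1)])
  have gB: "elemP ?B g" by (rule elemP_mono[OF g \<phi>(2)])
  have inj: "inj_on ?g1 ?B" by (rule elem_inj[OF g1])
  have pe: "partial_elementary L M (?g1 ` ?B) (\<lambda>c. g (inv_into ?B ?g1 c))" by (rule elem_pe[OF g1 gB])
  obtain \<sigma> where \<sigma>: "\<sigma> \<in> Aut L M" "\<forall>c\<in>?g1 ` ?B. \<sigma> c = g (inv_into ?B ?g1 c)"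
    using homM pe finite_params[of \<phi>] unfolding strongly_aleph0_homogeneous_def by blast
  have m: "map_par \<sigma> (map_par ?g1 \<phi>) = map_par g \<phi>"
    unfolding map_par_comp by (rule map_par_cong) (use \<sigma>(2) inv_into_f_f[OF inj] in auto)
  have LM1: "map_par ?g1 \<phi> \<in> LM_formulas L M" by (rule elem_LM[OF g1 \<phi>(1)]) simp
  have "act_type \<sigma> ` tbox L \<pi> M (map_par ?g1 \<phi>) = tbox L \<pi> M (map_par g \<phi>)"
    using act_box[OF strM \<sigma>(1) pt LM1] m by simp
  hence "emeasure \<mu> (tbox L \<pi> M (map_par g \<phi>)) = emeasure \<mu> (tbox L \<pi> M (map_par ?g1 \<phi>))"
    using inv_mu[OF \<sigma>(1) box_sets[OF LM1]] by simp
  thus ?thesis unfolding nu0_def measure_def by simp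
qed

lemma N2:
  assumes \<phi>: "\<phi> \<in> LM_formulas L M'" and \<psi>: "\<psi> \<in> LM_formulas L M'"
    and eq: "tbox L \<pi> M' \<phi> = tbox L \<pi> M' \<psi>"
  shows "nu0 \<phi> = nu0 \<psi>"
proof -
  let ?A = "params \<phi> \<union> params \<psi>"
  have "finite ?A" using finite_params by blast
  moreover have "?A \<subseteq> univ M'" using LM_params[OF \<phi>] LM_params[OF \<psi>] by blast
  ultimately obtain g where g: "elemP ?A g" using elem_exists by blast
  have "tbox L \<pi> M (map_par g \<phi>) \<subseteq> tbox L \<pi> M (map_par g \<psi>)"
    using box_reflect[OF g \<phi> _ \<psi>] eq by blast
  moreover have "tbox L \<pi> M (map_par g \<psi>) \<subseteq> tbox L \<pi> M (map_par g \<phi>)"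
    using box_reflect[OF g \<psi> _ \<phi>] eq by blast
  ultimately have "tbox L \<pi> M (map_par g \<phi>) = tbox L \<pi> M (map_par g \<psi>)" by blast
  thus ?thesis using N1[OF g \<phi>] N1[OF g \<psi>] by simp
qed

definition Cl' :: "('f, 'r, 'x + nat, 'n) fm set set set" where
  "Cl' = {tbox L \<pi> M' \<phi> | \<phi>. \<phi> \<in> LM_formulas L M'}"

definition nuS :: "('f, 'r, 'x + nat, 'n) fm set set \<Rightarrow> real" where
  "nuS S = nu0 (SOME \<phi>. \<phi> \<in> LM_formulas L M' \<and> S = tbox L \<pi> M' \<phi>)"

lemma Cl'E: "C \<in> Cl' \<Longrightarrow> (\<And>\<phi>. \<phi> \<in> LM_formulas L M' \<Longrightarrow> C = tbox L \<pi> M' \<phi> \<Longrightarrow> P) \<Longrightarrow> P"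
  unfolding Cl'_def by blast
lemma Cl'I: "\<phi> \<in> LM_formulas L M' \<Longrightarrow> tbox L \<pi> M' \<phi> \<in> Cl'"
  unfolding Cl'_def by blast

lemma nuS_box: assumes "\<phi> \<in> LM_formulas L M'" shows "nuS (tbox L \<pi> M' \<phi>) = nu0 \<phi>"
proof -
  let ?\<psi> = "SOME \<psi>. \<psi> \<in> LM_formulas L M' \<and> tbox L \<pi> M' \<phi> = tbox L \<pi> M' \<psi>"
  have "?\<psi> \<in> LM_formulas L M' \<and> tbox L \<pi> M' \<phi> = tbox L \<pi> M' ?\<psi>"
    by (rule someI[of _ \<phi>]) (use assms in blast)
  hence a: "?\<psi> \<in> LM_formulas L M'" and b: "tbox L \<pi> M' \<phi> = tbox L \<pi> M' ?\<psi>" by blast+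
  have "nu0 \<phi> = nu0 ?\<psi>" by (rule N2[OF assms a b])
  thus ?thesis unfolding nuS_def by simp
qed

lemma prob: "prob_space \<mu>" using reg unfolding regular_borel_prob_def by blast
lemma space_mu: "space \<mu> = types_pi L \<pi> M"
  using reg topspace_stone[of L \<pi> M] unfolding regular_borel_prob_def by simp

lemma stone_inst: "stone (types_pi L \<pi> M') Cl' nuS (stone_top L \<pi> M')"
proof
  show "types_pi L \<pi> M' \<in> Cl'" unfolding Cl'_def using box_TT[of L \<pi> M'] TT_LM[of L M'] by blast
  show "C \<subseteq> types_pi L \<pi> M'" if "C \<in> Cl'" for C using that box_sub unfolding Cl'_def by blast
  show "types_pi L \<pi> M' - C \<in> Cl'" if C: "C \<in> Cl'" for C
  proof -
    obtain \<phi> where \<phi>: "\<phi> \<in> LM_formulas L M'" "C = tbox L \<pi> M' \<phi>" using C by (rule Cl'E)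
    thus ?thesis using box_Neg[OF \<phi>(1), of \<pi>] Cl'I[OF LM_Neg[OF \<phi>(1)]] by simp
  qed
  show "C \<inter> D \<in> Cl'" if CD: "C \<in> Cl'" "D \<in> Cl'" for C D
  proof -
    obtain \<phi> where \<phi>: "\<phi> \<in> LM_formulas L M'" "C = tbox L \<pi> M' \<phi>" using CD(1) by (rule Cl'E)
    obtain \<psi> where \<psi>: "\<psi> \<in> LM_formulas L M'" "D = tbox L \<pi> M' \<psi>" using CD(2) by (rule Cl'E)
    show ?thesis using box_Conj[OF \<phi>(1) \<psi>(1), of \<pi>] Cl'I[OF LM_Conj[OF \<phi>(1) \<psi>(1)]] \<phi>(2) \<psi>(2) by simp
  qed
  show "\<exists>\<D>'\<subseteq>\<D>. finite \<D>' \<and> C \<subseteq> \<Union>\<D>'" if C: "C \<in> Cl'" and D: "\<D> \<subseteq> Cl'" and cov: "C \<subseteq> \<Union>\<D>" for C \<D>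
  proof -
    obtain \<phi> where \<phi>: "\<phi> \<in> LM_formulas L M'" "C = tbox L \<pi> M' \<phi>" using C by (rule Cl'E)
    let ?\<Psi> = "{\<psi>\<in>LM_formulas L M'. tbox L \<pi> M' \<psi> \<in> \<D>}"
    have DD: "\<D> = tbox L \<pi> M' ` ?\<Psi>" using D unfolding Cl'_def by blast
    obtain \<Psi>' where \<Psi>': "\<Psi>' \<subseteq> ?\<Psi>" "finite \<Psi>'" "tbox L \<pi> M' \<phi> \<subseteq> \<Union>(tbox L \<pi> M' ` \<Psi>')"
      using box_compact[OF pt \<phi>(1), of ?\<Psi>] cov \<phi>(2) DD by auto
    show ?thesis using \<Psi>' \<phi>(2) by (intro exI[of _ "tbox L \<pi> M' ` \<Psi>'"]) auto
  qed
  show "0 \<le> nuS C" if "C \<in> Cl'" for C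
    using that nuS_box unfolding Cl'_def nu0_def by auto
  show "nuS (types_pi L \<pi> M') = 1"
  proof -
    have "nuS (types_pi L \<pi> M') = nu0 TT" using nuS_box[OF TT_LM] box_TT[of L \<pi> M'] by simp
    also have "\<dots> = measure \<mu> (types_pi L \<pi> M)" unfolding nu0_def map_par_TT box_TT ..
    also have "\<dots> = 1" using prob_space.prob_space[OF prob] space_mu by simp
    finally show ?thesis .
  qed
  show "nuS (C \<union> D) = nuS C + nuS D" if CD: "C \<in> Cl'" "D \<in> Cl'" "C \<inter> D = {}" for C D
  proof -
    obtain \<phi> where \<phi>: "\<phi> \<in> LM_formulas L M'" "C = tbox L \<pi> M' \<phi>" using CD(1) by (rule Cl'E)
    obtain \<psi> where \<psi>: "\<psi> \<in> LM_formulas L M'" "D = tbox L \<pi> M' \<psi>" using CD(2) by (rule Cl'E)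
    let ?A = "params \<phi> \<union> params \<psi>"
    have "finite ?A" using finite_params by blast
    moreover have "?A \<subseteq> univ M'" using LM_params[OF \<phi>(1)] LM_params[OF \<psi>(1)] by blast
    ultimately obtain g where g: "elemP ?A g" using elem_exists by blast
    define Or where "Or = (\<lambda>a b :: ('f, 'r, 'x + nat, 'n) fm. Neg (Conj (Neg a) (Neg b)))"
    have OrLM: "Or \<phi> \<psi> \<in> LM_formulas L M'" unfolding Or_def using \<phi> \<psi> by (intro LM_Neg LM_Conj)
    have box_Or: "tbox L \<pi> N (Neg (Conj (Neg a) (Neg b))) = tbox L \<pi> N a \<union> tbox L \<pi> N b"
      if "a \<in> LM_formulas L N" "b \<in> LM_formulas L N" for a b :: "('f, 'r, 'x + nat, 'k) fm" and N :: "('f, 'r, 'k) struct"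
      using that box_sub[of L \<pi> N] by (simp add: box_Neg box_Conj LM_Neg LM_Conj) blast
    have CUD: "C \<union> D = tbox L \<pi> M' (Or \<phi> \<psi>)" unfolding Or_def using box_Or[OF \<phi>(1) \<psi>(1)] \<phi> \<psi> by simp
    have g\<phi>: "map_par g \<phi> \<in> LM_formulas L M" by (rule elem_LM[OF g \<phi>(1)]) auto
    have g\<psi>: "map_par g \<psi> \<in> LM_formulas L M" by (rule elem_LM[OF g \<psi>(1)]) auto
    have "tbox L \<pi> M' \<phi> \<subseteq> tbox L \<pi> M' (Neg \<psi>)" using CD(3) \<phi> \<psi> box_Neg[OF \<psi>(1)] box_sub by blast
    hence "tbox L \<pi> M (map_par g \<phi>) \<subseteq> tbox L \<pi> M (map_par g (Neg \<psi>))"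
      using box_reflect[OF g \<phi>(1) _ LM_Neg[OF \<psi>(1)]] by auto
    hence disj: "tbox L \<pi> M (map_par g \<phi>) \<inter> tbox L \<pi> M (map_par g \<psi>) = {}"
      using box_Neg[OF g\<psi>] by auto
    have "nuS (C \<union> D) = nu0 (Or \<phi> \<psi>)" unfolding CUD by (rule nuS_box[OF OrLM])
    also have "\<dots> = measure \<mu> (tbox L \<pi> M (map_par g (Or \<phi> \<psi>)))"
      by (rule N1[OF g OrLM]) (auto simp: Or_def)
    also have "tbox L \<pi> M (map_par g (Or \<phi> \<psi>)) = tbox L \<pi> M (map_par g \<phi>) \<union> tbox L \<pi> M (map_par g \<psi>)"
      unfolding Or_def using box_Or[OF g\<phi> g\<psi>] by simp
    also have "measure \<mu> \<dots> = measure \<mu> (tbox L \<pi> M (map_par g \<phi>)) + measure \<mu> (tbox L \<pi> M (map_par g \<psi>))"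
      using prob_space.finite_measure[OF prob] box_sets[OF g\<phi>] box_sets[OF g\<psi>] disj
      by (simp add: finite_measure.finite_measure_Union)
    also have "\<dots> = nu0 \<phi> + nu0 \<psi>" using N1[OF g \<phi>(1)] N1[OF g \<psi>(1)] by simp
    finally show ?thesis using nuS_box \<phi> \<psi> by simp
  qed
  show "openin (stone_top L \<pi> M') U \<longleftrightarrow> U \<subseteq> types_pi L \<pi> M' \<and> (\<forall>x\<in>U. \<exists>C\<in>Cl'. x \<in> C \<and> C \<subseteq> U)" for U
    unfolding stone_open_iff Cl'_def by blast
qed

lemma nu0_aut:
  assumes \<sigma>: "\<sigma> \<in> Aut L M'" and \<phi>: "\<phi> \<in> LM_formulas L M'"
  shows "nu0 (map_par \<sigma> \<phi>) = nu0 \<phi>"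
proof -
  let ?t = "inv_into (univ M') \<sigma>"
  have t: "?t \<in> Aut L M'" by (rule aut_inv[OF strM' \<sigma>])
  let ?g0 = "gsel \<phi>"
  have g0: "elemP (params \<phi>) ?g0" by (rule gsel[OF \<phi>])
  have pu: "params \<phi> \<subseteq> univ M'" by (rule LM_params[OF \<phi>])
  have su: "\<sigma> ` params \<phi> \<subseteq> univ M'" using aut_bij[OF \<sigma>] pu unfolding bij_betw_def by blast
  let ?g' = "\<lambda>a. ?g0 (?t a)"
  have g': "elemP (\<sigma> ` params \<phi>) ?g'"
    unfolding elemP_def
  proof (intro conjI allI impI)
    show "\<sigma> ` params \<phi> \<subseteq> univ M'" by (rule su)
    show "?g' ` \<sigma> ` params \<phi> \<subseteq> univ M"
    proof
      fix y assume "y \<in> ?g' ` \<sigma> ` params \<phi>"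
      then obtain a where a: "a \<in> params \<phi>" "y = ?g' (\<sigma> a)" by blast
      hence "y = ?g0 a" using aut_id_inv[OF \<sigma>, of a] pu by auto
      thus "y \<in> univ M" using g0 a(1) unfolding elemP_def by blast
    qed
    fix ch :: "('f, 'r, nat, 'n) fm" assume ch: "wf_fm L ch \<and> params ch \<subseteq> \<sigma> ` params \<phi> \<and> fv ch = {}"
    have cu: "params ch \<subseteq> univ M'" using ch su by blast
    have "sat M' e0' ch = sat M' (\<lambda>v. ?t (e0' v)) (map_par ?t ch)"
      using aut_sat[OF strM' t, of ch e0'] ch cu e0' by simp
    also have "\<dots> = sat M' e0' (map_par ?t ch)" by (rule sentence_sat) (use ch in simp)
    also have "\<dots> = sat M e0 (map_par ?g0 (map_par ?t ch))"
    proof (rule elemPD[OF g0])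
      show "wf_fm L (map_par ?t ch)" using ch by simp
      show "fv (map_par ?t ch) = {}" using ch by simp
      show "params (map_par ?t ch) \<subseteq> params \<phi>"
      proof
        fix y assume "y \<in> params (map_par ?t ch)"
        then obtain x where x: "x \<in> params ch" "y = ?t x" by auto
        then obtain a where a: "a \<in> params \<phi>" "x = \<sigma> a" using ch by blast
        have "y = a" using x a aut_id_inv[OF \<sigma>, of a] pu by auto
        thus "y \<in> params \<phi>" using a by simp
      qed
    qed
    also have "map_par ?g0 (map_par ?t ch) = map_par ?g' ch" by (rule map_par_comp)
    finally show "sat M' e0' ch = sat M e0 (map_par ?g' ch)" .
  qed
  have \<sigma>\<phi>: "map_par \<sigma> \<phi> \<in> LM_formulas L M'" by (rule aut_LM[OF \<sigma> \<phi>])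
  have "nu0 (map_par \<sigma> \<phi>) = measure \<mu> (tbox L \<pi> M (map_par ?g' (map_par \<sigma> \<phi>)))"
    by (rule N1[OF g' \<sigma>\<phi>]) simp
  also have "map_par ?g' (map_par \<sigma> \<phi>) = map_par ?g0 \<phi>"
    unfolding map_par_comp by (rule map_par_cong) (use aut_id_inv[OF \<sigma>] pu in auto)
  finally show ?thesis unfolding nu0_def .
qed

theorem result: "\<exists>\<mu>'. aut_invariant_measure L \<pi> M' \<mu>'"
proof -
  interpret S: stone "types_pi L \<pi> M'" Cl' nuS "stone_top L \<pi> M'" by (rule stone_inst)
  obtain \<mu>' where \<mu>': "regular_borel_prob (stone_top L \<pi> M') \<mu>'"
    "\<And>f g. S.INV f g \<Longrightarrow> (\<forall>B\<in>sets \<mu>'. emeasure \<mu>' (f ` B) = emeasure \<mu>' B)"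
    using S.main by blast
  have "\<forall>\<sigma>\<in>Aut L M'. \<forall>B\<in>sets \<mu>'. emeasure \<mu>' (act_type \<sigma> ` B) = emeasure \<mu>' B"
  proof (intro ballI)
    fix \<sigma> B assume \<sigma>: "\<sigma> \<in> Aut L M'" and B: "B \<in> sets \<mu>'"
    let ?t = "inv_into (univ M') \<sigma>"
    have t: "?t \<in> Aut L M'" by (rule aut_inv[OF strM' \<sigma>])
    have "S.INV (act_type \<sigma>) (act_type ?t)"
      unfolding S.INV_def
    proof (intro conjI ballI)
      fix q assume q: "q \<in> types_pi L \<pi> M'"
      show "act_type \<sigma> q \<in> types_pi L \<pi> M'" by (rule act_types_pi[OF strM' \<sigma> pt q])
      show "act_type ?t q \<in> types_pi L \<pi> M'" by (rule act_types_pi[OF strM' t pt q])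
      show "act_type ?t (act_type \<sigma> q) = q"
        by (rule act_act[OF _ types_pi_LM[OF q]]) (use aut_id_inv[OF \<sigma>] in blast)
      show "act_type \<sigma> (act_type ?t q) = q"
        by (rule act_act[OF _ types_pi_LM[OF q]]) (use aut_inv_id[OF \<sigma>] in blast)
    next
      fix C assume "C \<in> Cl'"
      then obtain \<phi> where \<phi>: "\<phi> \<in> LM_formulas L M'" "C = tbox L \<pi> M' \<phi>" unfolding Cl'_def by blast
      have e1: "act_type \<sigma> ` C = tbox L \<pi> M' (map_par \<sigma> \<phi>)" using act_box[OF strM' \<sigma> pt \<phi>(1)] \<phi>(2) by simp
      have e2: "act_type ?t ` C = tbox L \<pi> M' (map_par ?t \<phi>)" using act_box[OF strM' t pt \<phi>(1)] \<phi>(2) by simp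
      show "act_type \<sigma> ` C \<in> Cl'" unfolding e1 Cl'_def using aut_LM[OF \<sigma> \<phi>(1)] by blast
      show "act_type ?t ` C \<in> Cl'" unfolding e2 Cl'_def using aut_LM[OF t \<phi>(1)] by blast
      have "nuS (act_type \<sigma> ` C) = nuS (tbox L \<pi> M' (map_par \<sigma> \<phi>))" using e1 by simp
      also have "\<dots> = nu0 (map_par \<sigma> \<phi>)" by (rule nuS_box[OF aut_LM[OF \<sigma> \<phi>(1)]])
      also have "\<dots> = nu0 \<phi>" by (rule nu0_aut[OF \<sigma> \<phi>(1)])
      also have "\<dots> = nuS C" using nuS_box[OF \<phi>(1)] \<phi>(2) by simp
      finally show "nuS (act_type \<sigma> ` C) = nuS C" .
    qed
    thus "emeasure \<mu>' (act_type \<sigma> ` B) = emeasure \<mu>' B" using \<mu>'(2) B by blast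
  qed
  thus ?thesis using \<mu>'(1) unfolding aut_invariant_measure_def by blast
qed

end

theorem proposition3p3:
  fixes L :: "('f, 'r) lang"
    and T :: "('f, 'r, 'x + nat, unit) fm set"
    and \<pi> :: "('f, 'r, 'x + nat, unit) fm set"
    and M :: "('f, 'r, 'm) struct"
    and M' :: "('f, 'r, 'n) struct"
  assumes "complete_theory L T"
    and "partial_type L \<pi>"
    and "is_model L T M" and "aleph0_saturated L M" and "strongly_aleph0_homogeneous L M"
    and "is_model L T M'" and "aleph0_saturated L M'" and "strongly_aleph0_homogeneous L M'"
    and "\<exists>\<mu>. aut_invariant_measure L \<pi> M \<mu>"
  shows "\<exists>\<mu>'. aut_invariant_measure L \<pi> M' \<mu>'"
proof -
  obtain \<mu> where \<mu>: "aut_invariant_measure L \<pi> M \<mu>" using assms(9) by blast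
  interpret transfer2 L T \<pi> M M' \<mu>
    by unfold_locales (use assms \<mu> in auto)
  show ?thesis by (rule result)
qed

end
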